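(* Let $\mathbb{F}$ be a field of characteristic $2$ with at least $4$ elements, let $k\geq 1$ be an integer, and let $B\in M_{4k+1}(\mathbb{F})$ be a non-derogative matrix with $\operatorname{Trace}(B)=c$. Then for every $a\in\mathbb{F}$ with $a\neq 0,1$, there exist $N,D\in M_{4k+1}(\mathbb{F})$ with $B=N+D$, $N^2=0$, and $D$ diagonalizable with every eigenvalue in $\{c,\ c+1,\ c+a,\ c+a+1\}$.
   Context: A square matrix is non-derogative if its minimal polynomial equals its characteristic polynomial. A matrix $D\in M_n(\mathbb{F})$ is diagonalizable if there exists an invertible $U\in M_n(\mathbb{F})$ such that $U^{-1}DU$ is diagonal. *)

theory Defs
  imports "Jordan_Normal_Form.Char_Poly"
begin

definition mat_trace :: "'a :: comm_ring_1 mat \<Rightarrow> 'a" where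
  "mat_trace A = (\<Sum>i<dim_row A. A $$ (i, i))"

definition poly_mat :: "'a :: comm_ring_1 poly \<Rightarrow> 'a mat \<Rightarrow> 'a mat" where
  "poly_mat p A = foldr (\<lambda>i M. coeff p i \<cdot>\<^sub>m (A ^\<^sub>m i) + M) [0..<Suc (degree p)]
                     (0\<^sub>m (dim_row A) (dim_row A))"

definition is_minimal_poly :: "'a :: field mat \<Rightarrow> 'a poly \<Rightarrow> bool" where
  "is_minimal_poly A p \<longleftrightarrow>
     monic p \<and> poly_mat p A = 0\<^sub>m (dim_row A) (dim_row A) \<and>
     (\<forall>q. q \<noteq> 0 \<and> poly_mat q A = 0\<^sub>m (dim_row A) (dim_row A) \<longrightarrow> degree p \<le> degree q)"

definition minimal_poly :: "'a :: field mat \<Rightarrow> 'a poly" where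
  "minimal_poly A = (THE p. is_minimal_poly A p)"

definition non_derogative :: "'a :: field mat \<Rightarrow> bool" where
  "non_derogative A \<longleftrightarrow> minimal_poly A = char_poly A"

definition diagonalizable :: "'a :: field mat \<Rightarrow> bool" where
  "diagonalizable D \<longleftrightarrow> (\<exists>U V. U \<in> carrier_mat (dim_row D) (dim_row D) \<and>
       V \<in> carrier_mat (dim_row D) (dim_row D) \<and>
       U * V = 1\<^sub>m (dim_row D) \<and> V * U = 1\<^sub>m (dim_row D) \<and>
       diagonal_mat (V * D * U))"

end

theory Submission
  imports Defs "HOL-Computational_Algebra.Polynomial_Factorial"
begin

lemma pow_mat_Suc_left:
  assumes A: "A \<in> carrier_mat n n"
  shows "A ^\<^sub>m Suc l = A * A ^\<^sub>m l"
proof (induct l)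
  case 0
  then show ?case using A by simp
next
  case (Suc l)
  have "A ^\<^sub>m Suc (Suc l) = (A * A ^\<^sub>m l) * A" using Suc by simp
  also have "\<dots> = A * (A ^\<^sub>m l * A)" using A by (simp add: assoc_mult_mat[of _ n n _ n _ n])
  finally show ?case by simp
qed

lemma foldr_pm:
  assumes A: "A \<in> carrier_mat n n"
  shows "foldr (\<lambda>i M. coeff p i \<cdot>\<^sub>m (A ^\<^sub>m i) + M) xs (0\<^sub>m n n) \<in> carrier_mat n n \<and>
    (\<forall>i j. i < n \<longrightarrow> j < n \<longrightarrow> foldr (\<lambda>i M. coeff p i \<cdot>\<^sub>m (A ^\<^sub>m i) + M) xs (0\<^sub>m n n) $$ (i,j)
       = (\<Sum>l\<leftarrow>xs. coeff p l * (A ^\<^sub>m l) $$ (i,j)))"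
  by (induct xs) (auto simp: A carrier_matD[OF A])

lemma pm_carrier[simp]:
  assumes A: "A \<in> carrier_mat n n"
  shows "poly_mat p A \<in> carrier_mat n n"
proof -
  have d: "dim_row A = n" using A by auto
  show ?thesis unfolding poly_mat_def d by (rule conjunct1[OF foldr_pm[OF A]])
qed

lemma pm_dims[simp]:
  assumes A: "A \<in> carrier_mat n n"
  shows "dim_row (poly_mat p A) = n" "dim_col (poly_mat p A) = n"
  using pm_carrier[OF A] by auto

lemma pm_index:
  assumes A: "A \<in> carrier_mat n n" and ij: "i < n" "j < n" and K: "degree p < K"
  shows "poly_mat p A $$ (i,j) = (\<Sum>l<K. coeff p l * (A ^\<^sub>m l) $$ (i,j))"
proof -
  have "poly_mat p A $$ (i,j) = (\<Sum>l\<leftarrow>[0..<Suc (degree p)]. coeff p l * (A ^\<^sub>m l) $$ (i,j))"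
    using foldr_pm[OF A, of p "[0..<Suc (degree p)]"] A ij unfolding poly_mat_def by (simp del: upt_Suc)
  also have "\<dots> = (\<Sum>l<Suc (degree p). coeff p l * (A ^\<^sub>m l) $$ (i,j))"
    by (simp only: sum_set_upt_conv_sum_list_nat[symmetric] set_upt atLeast0LessThan)
  also have "\<dots> = (\<Sum>l<K. coeff p l * (A ^\<^sub>m l) $$ (i,j))"
    by (rule sum.mono_neutral_left) (use K in \<open>auto simp: coeff_eq_0\<close>)
  finally show ?thesis .
qed

lemma pm_add:
  assumes A: "A \<in> carrier_mat n n"
  shows "poly_mat (p + q) A = poly_mat p A + poly_mat q A"
proof (rule eq_matI)
  let ?K = "Suc (max (degree p) (degree q))"
  fix i j assume "i < dim_row (poly_mat p A + poly_mat q A)" "j < dim_col (poly_mat p A + poly_mat q A)"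
  then have ij: "i < n" "j < n" using A by auto
  have d: "degree (p + q) < ?K" using degree_add_le_max[of p q] by simp
  show "poly_mat (p + q) A $$ (i, j) = (poly_mat p A + poly_mat q A) $$ (i, j)"
    using A ij by (simp add: pm_index[OF A ij d] pm_index[OF A ij, of p ?K] pm_index[OF A ij, of q ?K]
        sum.distrib distrib_right)
qed (use A in auto)

lemma pm_minus:
  assumes A: "A \<in> carrier_mat n n"
  shows "poly_mat (p - q) A = poly_mat p A - poly_mat q A"
proof (rule eq_matI)
  let ?K = "Suc (max (degree p) (degree q))"
  fix i j assume "i < dim_row (poly_mat p A - poly_mat q A)" "j < dim_col (poly_mat p A - poly_mat q A)"
  then have ij: "i < n" "j < n" using A by auto
  have d: "degree (p - q) < ?K" using degree_diff_le_max[of p q] by simp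
  show "poly_mat (p - q) A $$ (i, j) = (poly_mat p A - poly_mat q A) $$ (i, j)"
    using A ij by (simp add: pm_index[OF A ij d] pm_index[OF A ij, of p ?K] pm_index[OF A ij, of q ?K]
        sum_subtractf left_diff_distrib)
qed (use A in auto)

lemma pm_smult:
  assumes A: "A \<in> carrier_mat n n"
  shows "poly_mat (Polynomial.smult c p) A = c \<cdot>\<^sub>m poly_mat p A"
proof (rule eq_matI)
  let ?K = "Suc (degree p)"
  fix i j assume "i < dim_row (c \<cdot>\<^sub>m poly_mat p A)" "j < dim_col (c \<cdot>\<^sub>m poly_mat p A)"
  then have ij: "i < n" "j < n" using A by auto
  have d: "degree (Polynomial.smult c p) < ?K" using degree_smult_le[of c p] by simp
  show "poly_mat (Polynomial.smult c p) A $$ (i, j) = (c \<cdot>\<^sub>m poly_mat p A) $$ (i, j)"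
    using A ij by (simp add: pm_index[OF A ij d] pm_index[OF A ij, of p ?K] sum_distrib_left mult.assoc distrib_left)
qed (use A in auto)

lemma pm_const:
  assumes A: "A \<in> carrier_mat n n"
  shows "poly_mat [:c:] A = c \<cdot>\<^sub>m 1\<^sub>m n"
proof (rule eq_matI)
  fix i j assume "i < dim_row (c \<cdot>\<^sub>m 1\<^sub>m n)" "j < dim_col (c \<cdot>\<^sub>m 1\<^sub>m n)"
  then have ij: "i < n" "j < n" using A by auto
  show "poly_mat [:c:] A $$ (i, j) = (c \<cdot>\<^sub>m 1\<^sub>m n) $$ (i, j)"
    using A ij by (simp add: pm_index[OF A ij, of _ 1])
qed (use A in auto)

lemma pm_zero:
  assumes A: "A \<in> carrier_mat n n"
  shows "poly_mat 0 A = 0\<^sub>m n n"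
  using pm_const[OF A, of 0] by (simp add: smult_zero_mat[symmetric] del: smult_zero_mat)
    (rule eq_matI, auto)

lemma pm_X:
  assumes A: "A \<in> carrier_mat n n"
  shows "poly_mat [:0,1:] A = A"
proof (rule eq_matI)
  fix i j assume "i < dim_row A" "j < dim_col A"
  then have ij: "i < n" "j < n" using A by auto
  show "poly_mat [:0,1:] A $$ (i, j) = A $$ (i, j)"
    using A ij by (simp add: pm_index[OF A ij, of _ 2] numeral_2_eq_2)
qed (use A in auto)

lemma pm_pCons0:
  assumes A: "A \<in> carrier_mat n n"
  shows "poly_mat (pCons 0 p) A = A * poly_mat p A"
proof (rule eq_matI)
  let ?K = "Suc (degree p)"
  fix i j assume "i < dim_row (A * poly_mat p A)" "j < dim_col (A * poly_mat p A)"
  then have ij: "i < n" "j < n" using A by auto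
  have d: "degree (pCons 0 p) < Suc ?K" by (cases "p = 0") auto
  have "poly_mat (pCons 0 p) A $$ (i, j) = (\<Sum>l<Suc ?K. coeff (pCons 0 p) l * (A ^\<^sub>m l) $$ (i,j))"
    by (rule pm_index[OF A ij d])
  also have "\<dots> = (\<Sum>l<?K. coeff p l * (A ^\<^sub>m Suc l) $$ (i,j))"
    by (subst sum.lessThan_Suc_shift) simp
  also have "\<dots> = (\<Sum>l<?K. coeff p l * (\<Sum>m<n. A $$ (i,m) * (A ^\<^sub>m l) $$ (m,j)))"
    by (rule sum.cong, simp, subst pow_mat_Suc_left[OF A], insert A ij,
        auto simp: scalar_prod_def atLeast0LessThan)
  also have "\<dots> = (\<Sum>m<n. A $$ (i,m) * (\<Sum>l<?K. coeff p l * (A ^\<^sub>m l) $$ (m,j)))"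
    by (simp add: sum_distrib_left sum_distrib_right sum.swap[of _ "{..<n}"] mult_ac del: sum.lessThan_Suc)
  also have "\<dots> = (A * poly_mat p A) $$ (i, j)"
    using A ij by (auto simp: scalar_prod_def atLeast0LessThan pm_index[OF A _ ij(2), of _ p ?K] intro!: sum.cong)
  finally show "poly_mat (pCons 0 p) A $$ (i, j) = (A * poly_mat p A) $$ (i, j)" .
qed (use A in auto)

lemma pm_mult:
  assumes A: "A \<in> carrier_mat n n"
  shows "poly_mat (p * q) A = poly_mat p A * poly_mat q A"
proof (induct p rule: pCons_induct)
  case 0
  then show ?case using A by (simp add: pm_zero)
next
  case (pCons a p)
  have e1: "pCons a p * q = Polynomial.smult a q + pCons 0 (p * q)" by simp
  have e2: "pCons a p = [:a:] + pCons 0 p" by simp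
  have P: "poly_mat p A \<in> carrier_mat n n" "poly_mat q A \<in> carrier_mat n n" using A by auto
  have "poly_mat (pCons a p * q) A = a \<cdot>\<^sub>m poly_mat q A + A * (poly_mat p A * poly_mat q A)"
    unfolding e1 using A pCons(2) by (simp add: pm_add pm_smult pm_pCons0)
  also have "\<dots> = (a \<cdot>\<^sub>m 1\<^sub>m n + A * poly_mat p A) * poly_mat q A"
  proof -
    have "(a \<cdot>\<^sub>m 1\<^sub>m n + A * poly_mat p A) * poly_mat q A = (a \<cdot>\<^sub>m 1\<^sub>m n) * poly_mat q A + (A * poly_mat p A) * poly_mat q A"
      by (rule add_mult_distrib_mat[of _ n n]) (use A P in auto)
    also have "\<dots> = a \<cdot>\<^sub>m poly_mat q A + A * (poly_mat p A * poly_mat q A)"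
      using A P by (simp add: mult_smult_assoc_mat[of "1\<^sub>m n" n n "poly_mat q A" n a] assoc_mult_mat[of _ n n _ n _ n])
    finally show ?thesis by simp
  qed
  also have "\<dots> = poly_mat (pCons a p) A * poly_mat q A"
    by (subst e2) (simp only: pm_add[OF A] pm_const[OF A] pm_pCons0[OF A])
  finally show ?case .
qed

lemma pm_linear:
  assumes A: "A \<in> carrier_mat n n"
  shows "poly_mat [:- x, 1:] A = A - x \<cdot>\<^sub>m 1\<^sub>m n"
proof -
  have e: "[:- x, 1:] = [:0,1:] - [:x:]" by simp
  show ?thesis by (subst e) (simp only: pm_minus[OF A] pm_X[OF A] pm_const[OF A])
qed

lemma pm_vec_index:
  assumes A: "A \<in> carrier_mat n n" and v: "v \<in> carrier_vec n" and i: "i < n" and K: "degree p < K"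
  shows "(poly_mat p A *\<^sub>v v) $ i = (\<Sum>l<K. coeff p l * (A ^\<^sub>m l *\<^sub>v v) $ i)"
proof -
  have "(poly_mat p A *\<^sub>v v) $ i = (\<Sum>m<n. (\<Sum>l<K. coeff p l * (A ^\<^sub>m l) $$ (i,m)) * v $ m)"
    using A v i by (auto simp: scalar_prod_def atLeast0LessThan pm_index[OF A i _ K] intro!: sum.cong)
  also have "\<dots> = (\<Sum>l<K. coeff p l * (\<Sum>m<n. (A ^\<^sub>m l) $$ (i,m) * v $ m))"
    by (simp add: sum_distrib_left sum_distrib_right sum.swap[of _ "{..<n}"] mult_ac)
  also have "\<dots> = (\<Sum>l<K. coeff p l * (A ^\<^sub>m l *\<^sub>v v) $ i)"
    using A v i by (auto simp: scalar_prod_def atLeast0LessThan intro!: sum.cong)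
  finally show ?thesis .
qed

definition ann :: "'a::field mat \<Rightarrow> 'a vec \<Rightarrow> 'a poly \<Rightarrow> bool" where
  "ann A v q \<longleftrightarrow> poly_mat q A *\<^sub>v v = 0\<^sub>v (dim_row A)"

definition gen :: "'a::field mat \<Rightarrow> 'a vec \<Rightarrow> 'a poly \<Rightarrow> bool" where
  "gen A v g \<longleftrightarrow> g \<noteq> 0 \<and> (\<forall>q. ann A v q \<longleftrightarrow> g dvd q)"

lemma pm_vec_carrier[simp]:
  "A \<in> carrier_mat n n \<Longrightarrow> v \<in> carrier_vec n \<Longrightarrow> poly_mat p A *\<^sub>v v \<in> carrier_vec n"
  using pm_carrier[of A n p] mult_mat_vec_carrier by blast

lemma mat_vec_zero: "B \<in> carrier_mat m n \<Longrightarrow> B *\<^sub>v 0\<^sub>v n = 0\<^sub>v m"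
  by (rule eq_vecI) (auto simp: scalar_prod_def)

lemma ann_compose:
  assumes A: "A \<in> carrier_mat n n" and v: "v \<in> carrier_vec n"
  shows "ann A (poly_mat p A *\<^sub>v v) q \<longleftrightarrow> ann A v (q * p)"
  using A v by (simp add: ann_def pm_mult[OF A] assoc_mult_mat_vec[of _ n n _ n])

lemma ann_mult:
  assumes A: "A \<in> carrier_mat n n" and v: "v \<in> carrier_vec n" and a: "ann A v q"
  shows "ann A v (s * q)"
proof -
  have "poly_mat (s * q) A *\<^sub>v v = poly_mat s A *\<^sub>v (poly_mat q A *\<^sub>v v)"
    using A v by (simp add: pm_mult[OF A] assoc_mult_mat_vec[of _ n n _ n])
  also have "\<dots> = 0\<^sub>v n" using a A unfolding ann_def by (simp add: mat_vec_zero[of _ n n])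
  finally show ?thesis using A unfolding ann_def by simp
qed

lemma ann_minus:
  assumes A: "A \<in> carrier_mat n n" and v: "v \<in> carrier_vec n" and a: "ann A v p" "ann A v q"
  shows "ann A v (p - q)"
  using a A v unfolding ann_def
  by (simp add: pm_minus[OF A] minus_mult_distrib_mat_vec[of _ n n])

lemma ann_add:
  assumes A: "A \<in> carrier_mat n n" and v: "v \<in> carrier_vec n" and a: "ann A v p" "ann A v q"
  shows "ann A v (p + q)"
  using a A v unfolding ann_def
  by (simp add: pm_add[OF A] add_mult_distrib_mat_vec[of _ n n])

lemma ann_exists:
  assumes A: "A \<in> carrier_mat n n" and v: "v \<in> carrier_vec n"
  shows "\<exists>q. q \<noteq> 0 \<and> degree q \<le> n \<and> ann A v q"
proof -
  define K where "K = mat (Suc n) (Suc n) (\<lambda>(i,j). if i < n then (A ^\<^sub>m j *\<^sub>v v) $ i else 0)"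
  have K: "K \<in> carrier_mat (Suc n) (Suc n)" unfolding K_def by auto
  have "det K = (\<Sum>j<Suc n. K $$ (n, j) * cofactor K n j)"
    by (rule laplace_expansion_row[OF K]) simp
  also have "\<dots> = 0" unfolding K_def by simp
  finally have "det K = 0" .
  then obtain x where x: "x \<in> carrier_vec (Suc n)" "x \<noteq> 0\<^sub>v (Suc n)" "K *\<^sub>v x = 0\<^sub>v (Suc n)"
    using det_0_iff_vec_prod_zero_field[OF K] by auto
  define q where "q = (\<Sum>j<Suc n. monom (x $ j) j)"
  have cq: "coeff q l = (if l < Suc n then x $ l else 0)" for l
    unfolding q_def coeff_sum by (auto simp: coeff_monom)
  have dq: "degree q \<le> n" by (rule degree_le) (auto simp: cq)
  have "q \<noteq> 0"
  proof
    assume "q = 0"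
    then have "x $ l = 0" if "l < Suc n" for l using cq[of l] that by auto
    then have "x = 0\<^sub>v (Suc n)" using x(1) by (intro eq_vecI) auto
    with x(2) show False by simp
  qed
  moreover have "ann A v q"
    unfolding ann_def
  proof (rule eq_vecI)
    fix i assume i: "i < dim_vec (0\<^sub>v (dim_row A) :: 'a vec)"
    then have i: "i < n" using A by auto
    have "(poly_mat q A *\<^sub>v v) $ i = (\<Sum>l<Suc n. coeff q l * (A ^\<^sub>m l *\<^sub>v v) $ i)"
      by (rule pm_vec_index[OF A v i]) (use dq in auto)
    also have "\<dots> = (K *\<^sub>v x) $ i"
      using i x(1) unfolding K_def by (auto simp: scalar_prod_def cq atLeast0LessThan mult.commute intro!: sum.cong)
    also have "\<dots> = 0" using x(3) i by simp
    finally show "(poly_mat q A *\<^sub>v v) $ i = 0\<^sub>v (dim_row A) $ i" using i A by simp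
  qed (use A in auto)
  ultimately show ?thesis using dq by blast
qed

lemma gen_exists:
  assumes A: "A \<in> carrier_mat n n" and v: "v \<in> carrier_vec n"
  shows "\<exists>g. gen A v g \<and> degree g \<le> n"
proof -
  obtain q0 where q0: "q0 \<noteq> 0" "degree q0 \<le> n" "ann A v q0" using ann_exists[OF A v] by auto
  define P where "P = (\<lambda>d. \<exists>q. q \<noteq> 0 \<and> ann A v q \<and> degree q = d)"
  have "P (degree q0)" unfolding P_def using q0 by auto
  then have "P (Least P)" by (rule LeastI)
  then obtain g where g: "g \<noteq> 0" "ann A v g" "degree g = Least P" unfolding P_def by auto
  have "ann A v q \<longleftrightarrow> g dvd q" for q
  proof
    assume aq: "ann A v q"
    have "ann A v (q - (q div g) * g)" by (rule ann_minus[OF A v aq ann_mult[OF A v g(2)]])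
    moreover have "q - (q div g) * g = q mod g" by (simp add: minus_div_mult_eq_mod)
    ultimately have am: "ann A v (q mod g)" by simp
    show "g dvd q"
    proof (rule ccontr)
      assume "\<not> g dvd q"
      then have "q mod g \<noteq> 0" by (simp add: mod_eq_0_iff_dvd)
      moreover have "degree (q mod g) < degree g" using degree_mod_less_degree[OF g(1) \<open>\<not> g dvd q\<close>] .
      ultimately have "P (degree (q mod g))" unfolding P_def using am by auto
      then have "Least P \<le> degree (q mod g)" by (rule Least_le)
      with \<open>degree (q mod g) < degree g\<close> g(3) show False by simp
    qed
  next
    assume "g dvd q"
    then obtain s where "q = g * s" unfolding dvd_def by blast
    then show "ann A v q" using ann_mult[OF A v g(2), of s] by (simp add: mult.commute)
  qed
  then have "gen A v g" unfolding gen_def using g by auto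
  moreover have "degree g \<le> n"
  proof -
    have "g dvd q0" using \<open>gen A v g\<close> q0 unfolding gen_def by auto
    then have "degree g \<le> degree q0" using q0(1) by (rule dvd_imp_degree_le)
    then show ?thesis using q0 by simp
  qed
  ultimately show ?thesis by auto
qed

interpretation fp:
  normalization_euclidean_semiring where zero = "0 :: 'a :: field poly"
    and one = 1 and plus = plus and minus = minus
    and times = times
    and normalize = "\<lambda>p. Polynomial.smult (inverse (lead_coeff p)) p"
    and unit_factor = "\<lambda>p. [:lead_coeff p:]"
    and euclidean_size = "\<lambda>p. if p = 0 then 0 else 2 ^ degree p"
    and divide = divide and modulo = modulo
  rewrites "dvd.dvd (times :: 'a poly \<Rightarrow> _) = Rings.dvd"
    and "comm_monoid_mult.prod_mset times 1 = prod_mset"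
    and "comm_semiring_1.irreducible times 1 0 = irreducible"
    and "comm_semiring_1.prime_elem times 1 0 = prime_elem"
    and "power.power (1 :: 'a poly) times = (^)"
proof -
  show "power.power (1 :: 'a poly) times = (^)"
    by (simp add: power_dict)
  show "dvd.dvd (times :: 'a poly \<Rightarrow> _) = Rings.dvd"
    by (simp add: dvd_dict)
  show "comm_monoid_mult.prod_mset times 1 = prod_mset"
    by (simp add: prod_mset_dict)
  show "comm_semiring_1.irreducible times 1 0 = irreducible"
    by (simp add: irreducible_dict)
  show "comm_semiring_1.prime_elem times 1 0 = prime_elem"
    by (simp add: prime_elem_dict)
  show "class.normalization_euclidean_semiring divide plus minus (0 :: 'a poly) times 1
    modulo (\<lambda>p. if p = 0 then 0 else 2 ^ degree p)
    (\<lambda>p. [:lead_coeff p:]) (\<lambda>p. Polynomial.smult (inverse (lead_coeff p)) p)"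
  proof (standard, fold dvd_dict)
    fix p :: "'a poly"
    show "[:lead_coeff p:] * Polynomial.smult (inverse (lead_coeff p)) p = p"
      by (cases "p = 0") simp_all
  next
    fix p :: "'a poly" assume "is_unit p"
    then show "[:lead_coeff p:] = p"
      by (elim is_unit_polyE) (auto simp: monom_0 one_poly_def field_simps)
  next
    fix p :: "'a poly" assume "p \<noteq> 0"
    then show "is_unit [:lead_coeff p:]"
      by (simp add: is_unit_pCons_iff)
  next
    fix a b :: "'a poly" assume "is_unit a"
    then have "degree a = 0" by simp
    then have a: "a = [:coeff a 0:]" by (simp add: degree_0_id)
    have "[:lead_coeff ([:coeff a 0:] * b):] = [:coeff a 0:] * [:lead_coeff b:]" by simp
    with a show "[:lead_coeff (a * b):] = a * [:lead_coeff b:]" by metis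
  qed (auto simp: lead_coeff_mult Rings.div_mult_mod_eq intro!: degree_mod_less' degree_mult_right_le)
qed


lemma gen_degree:
  assumes A: "A \<in> carrier_mat n n" and v: "v \<in> carrier_vec n" and g: "gen A v g"
  shows "degree g \<le> n"
proof -
  obtain q0 where q0: "q0 \<noteq> 0" "degree q0 \<le> n" "ann A v q0" using ann_exists[OF A v] by auto
  have "g dvd q0" using g q0 unfolding gen_def by auto
  then have "degree g \<le> degree q0" using q0(1) by (rule dvd_imp_degree_le)
  then show ?thesis using q0 by simp
qed

lemma ann_sum_cancel:
  assumes A: "A \<in> carrier_mat n n" and v: "v \<in> carrier_vec n" and w: "w \<in> carrier_vec n"
    and a1: "ann A (v + w) q" and a2: "ann A v q"
  shows "ann A w q"
proof -
  have "poly_mat q A *\<^sub>v (v + w) = poly_mat q A *\<^sub>v v + poly_mat q A *\<^sub>v w"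
    using A v w by (simp add: mult_add_distrib_mat_vec[of _ n n])
  then have "0\<^sub>v n = 0\<^sub>v n + poly_mat q A *\<^sub>v w" using a1 a2 A unfolding ann_def by simp
  then have "poly_mat q A *\<^sub>v w = 0\<^sub>v n" using pm_vec_carrier[OF A w, of q] by simp
  then show ?thesis using A unfolding ann_def by simp
qed

lemma gen_key:
  assumes A: "A \<in> carrier_mat n n" and v: "v \<in> carrier_vec n" and w: "w \<in> carrier_vec n"
    and gv: "gen A v g" and gw: "gen A w h" and nd: "\<not> h dvd g"
  shows "\<exists>z \<in> carrier_vec n. \<exists>g'. gen A z g' \<and> degree g < degree g'"
proof -
  have g0: "g \<noteq> 0" and h0: "h \<noteq> 0" using gv gw unfolding gen_def by auto
  obtain pi where pr: "fp.prime pi" and lt: "fp.multiplicity pi g < fp.multiplicity pi h"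
    using nd fp.multiplicity_le_imp_dvd[OF h0, of g] by (meson not_le)
  define f where "f = fp.multiplicity pi g"
  define e where "e = fp.multiplicity pi h"
  have pe: "prime_elem pi" using pr by (simp add: fp.prime_def)
  have nu: "\<not> is_unit pi" using pe by (rule prime_elem_not_unit)
  have p0: "pi \<noteq> 0" using pe by auto
  obtain a where ga: "g = pi ^ f * a" and na: "\<not> pi dvd a"
    using fp.multiplicity_decompose'[OF g0 nu] unfolding f_def by blast
  have "pi ^ e dvd h" unfolding e_def by (rule fp.multiplicity_dvd)
  then obtain b where hb: "h = pi ^ e * b" unfolding dvd_def by blast
  have a0: "a \<noteq> 0" using ga g0 by auto
  have b0: "b \<noteq> 0" using hb h0 by auto
  define v' where "v' = poly_mat (pi ^ f) A *\<^sub>v v"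
  define w' where "w' = poly_mat b A *\<^sub>v w"
  have v'c: "v' \<in> carrier_vec n" unfolding v'_def using A v by simp
  have w'c: "w' \<in> carrier_vec n" unfolding w'_def using A w by simp
  have av': "ann A v' q \<longleftrightarrow> a dvd q" for q
  proof -
    have "ann A v' q \<longleftrightarrow> ann A v (q * pi ^ f)" unfolding v'_def by (rule ann_compose[OF A v])
    also have "\<dots> \<longleftrightarrow> g dvd q * pi ^ f" using gv unfolding gen_def by auto
    also have "\<dots> \<longleftrightarrow> a * pi ^ f dvd q * pi ^ f" unfolding ga by (simp add: mult.commute)
    also have "\<dots> \<longleftrightarrow> a dvd q" using p0 by (simp add: dvd_times_right_cancel_iff)
    finally show ?thesis .
  qed
  have aw': "ann A w' q \<longleftrightarrow> pi ^ e dvd q" for q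
  proof -
    have "ann A w' q \<longleftrightarrow> ann A w (q * b)" unfolding w'_def by (rule ann_compose[OF A w])
    also have "\<dots> \<longleftrightarrow> h dvd q * b" using gw unfolding gen_def by auto
    also have "\<dots> \<longleftrightarrow> pi ^ e * b dvd q * b" unfolding hb by simp
    also have "\<dots> \<longleftrightarrow> pi ^ e dvd q" using b0 by (simp add: dvd_times_right_cancel_iff)
    finally show ?thesis .
  qed
  define z where "z = v' + w'"
  have zc: "z \<in> carrier_vec n" unfolding z_def using v'c w'c by simp
  have zc': "z = w' + v'" unfolding z_def using v'c w'c by (simp add: comm_add_vec)
  have ma: "fp.multiplicity pi a = 0" using na by (rule fp.not_dvd_imp_multiplicity_0)
  have key: "pi ^ e * a dvd q" if az: "ann A z q" for q
  proof (cases "q = 0")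
    case True
    then show ?thesis by simp
  next
    case q0: False
    have "ann A z (a * q)" by (rule ann_mult[OF A zc az])
    moreover have "ann A v' (a * q)" using av' by simp
    ultimately have "ann A w' (a * q)" using ann_sum_cancel[OF A v'c w'c] unfolding z_def by blast
    then have "pi ^ e dvd a * q" using aw' by simp
    then have "e \<le> fp.multiplicity pi (a * q)" using fp.power_dvd_iff_le_multiplicity[OF _ nu] a0 q0 by simp
    also have "\<dots> = fp.multiplicity pi q" using fp.prime_elem_multiplicity_mult_distrib[OF pe a0 q0] ma by simp
    finally have d1: "e \<le> fp.multiplicity pi q" .
    have "ann A z (pi ^ e * q)" by (rule ann_mult[OF A zc az])
    moreover have "ann A w' (pi ^ e * q)" using aw' by simp
    ultimately have "ann A v' (pi ^ e * q)" using ann_sum_cancel[OF A w'c v'c] zc' by metis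
    then have d2: "a dvd pi ^ e * q" using av' by simp
    have pe0: "pi ^ e \<noteq> 0" using p0 by simp
    show ?thesis
    proof (rule fp.multiplicity_le_imp_dvd)
      show "pi ^ e * a \<noteq> 0" using pe0 a0 by simp
    next
      fix p :: "'a poly" assume pp: "fp.prime p"
      have ppe: "prime_elem p" using pp by (simp add: fp.prime_def)
      have m1: "fp.multiplicity p (pi ^ e * a) = e * fp.multiplicity p pi + fp.multiplicity p a"
        using fp.prime_elem_multiplicity_mult_distrib[OF ppe pe0 a0]
          fp.prime_elem_multiplicity_power_distrib[OF ppe p0] by simp
      show "fp.multiplicity p (pi ^ e * a) \<le> fp.multiplicity p q"
      proof (cases "p = pi")
        case True
        have "fp.multiplicity pi pi = 1" using fp.multiplicity_same_power[OF p0 nu, of 1] by simp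
        then show ?thesis using m1 True ma d1 by simp
      next
        case False
        have mo: "fp.multiplicity p pi = 0" using fp.prime_multiplicity_other[OF pp pr False] .
        have "fp.multiplicity p a \<le> fp.multiplicity p (pi ^ e * q)"
          using fp.dvd_imp_multiplicity_le[OF d2] pe0 q0 by simp
        also have "\<dots> = fp.multiplicity p q"
          using fp.prime_elem_multiplicity_mult_distrib[OF ppe pe0 q0]
            fp.prime_elem_multiplicity_power_distrib[OF ppe p0] mo by simp
        finally show ?thesis using m1 mo by simp
      qed
    qed
  qed
  obtain g' where g': "gen A z g'" using gen_exists[OF A zc] by auto
  then have g'0: "g' \<noteq> 0" and ag': "ann A z g'" unfolding gen_def by auto
  have "degree (pi ^ e * a) \<le> degree g'" using key[OF ag'] g'0 by (rule dvd_imp_degree_le)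
  moreover have "degree (pi ^ e * a) = e * degree pi + degree a"
    using p0 a0 by (simp add: degree_mult_eq degree_power_eq)
  moreover have "degree g = f * degree pi + degree a"
    using p0 a0 ga by (simp add: degree_mult_eq degree_power_eq)
  moreover have "degree pi > 0" using p0 nu is_unit_iff_degree by auto
  moreover have "f < e" using lt unfolding f_def e_def .
  ultimately have "degree g < degree g'" by (metis add_less_mono1 mult_less_mono1 order_less_le_trans)
  then show ?thesis using zc g' by auto
qed

lemma cyclic_main:
  assumes A: "A \<in> carrier_mat n n"
  shows "\<exists>v \<in> carrier_vec n. \<exists>g. gen A v g \<and> poly_mat g A = 0\<^sub>m n n"
proof -
  define S where "S = {d. \<exists>v \<in> carrier_vec n. \<exists>g. gen A v g \<and> degree g = d}"
  have Ssub: "S \<subseteq> {..n}" unfolding S_def using gen_degree[OF A] by auto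
  then have Sfin: "finite S" using finite_subset by blast
  obtain g0 where "gen A (0\<^sub>v n) g0" using gen_exists[OF A, of "0\<^sub>v n"] by auto
  then have "degree g0 \<in> S" unfolding S_def by auto
  then have Sne: "S \<noteq> {}" by auto
  have "Max S \<in> S" using Sfin Sne by simp
  then obtain v g where v: "v \<in> carrier_vec n" and g: "gen A v g" and dg: "degree g = Max S"
    unfolding S_def by auto
  have allw: "ann A w g" if w: "w \<in> carrier_vec n" for w
  proof -
    obtain h where h: "gen A w h" using gen_exists[OF A w] by auto
    have "h dvd g"
    proof (rule ccontr)
      assume "\<not> h dvd g"
      from gen_key[OF A v w g h this] obtain z g' where "z \<in> carrier_vec n" "gen A z g'" "degree g < degree g'"
        by auto
      then have "degree g' \<in> S" unfolding S_def by auto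
      then have "degree g' \<le> Max S" using Sfin by simp
      with dg \<open>degree g < degree g'\<close> show False by simp
    qed
    then show ?thesis using h unfolding gen_def by auto
  qed
  have "poly_mat g A = 0\<^sub>m n n"
  proof (rule eq_matI)
    fix i j assume ij: "i < dim_row (0\<^sub>m n n :: 'a mat)" "j < dim_col (0\<^sub>m n n :: 'a mat)"
    then have ij: "i < n" "j < n" by auto
    have "ann A (unit_vec n j) g" by (rule allw) simp
    then have "(poly_mat g A *\<^sub>v unit_vec n j) $ i = 0" using A ij unfolding ann_def by simp
    moreover have "(poly_mat g A *\<^sub>v unit_vec n j) $ i = poly_mat g A $$ (i, j)"
    proof -
      have "(poly_mat g A *\<^sub>v unit_vec n j) $ i = (\<Sum>m<n. poly_mat g A $$ (i, m) * (if m = j then 1 else 0))"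
        using A ij by (simp add: scalar_prod_def atLeast0LessThan)
      also have "\<dots> = (\<Sum>m<n. if m = j then poly_mat g A $$ (i, m) else 0)"
        by (rule sum.cong) auto
      also have "\<dots> = poly_mat g A $$ (i, j)" using ij by (simp add: sum.delta)
      finally show ?thesis .
    qed
    ultimately show "poly_mat g A $$ (i, j) = 0\<^sub>m n n $$ (i, j)" using ij by simp
  qed (use A in auto)
  then show ?thesis using v g by auto
qed

lemma nonderog_deg:
  assumes A: "A \<in> carrier_mat n n" and nd: "non_derogative A"
    and q: "q \<noteq> 0" "poly_mat q A = 0\<^sub>m n n"
  shows "n \<le> degree q"
proof -
  define P where "P = (\<lambda>d. \<exists>q. q \<noteq> 0 \<and> poly_mat q A = 0\<^sub>m n n \<and> degree q = d)"
  have Pq: "P (degree q)" using q by (auto simp: P_def)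
  then have "P (Least P)" by (rule LeastI)
  then obtain q1 where q1: "q1 \<noteq> 0" "poly_mat q1 A = 0\<^sub>m n n" "degree q1 = Least P" by (auto simp: P_def)
  define p1 where "p1 = Polynomial.smult (inverse (lead_coeff q1)) q1"
  have lc: "lead_coeff q1 \<noteq> 0" using q1(1) leading_coeff_0_iff by blast
  have p1m: "monic p1" using lc by (simp add: p1_def)
  have p1deg: "degree p1 = degree q1" using lc by (simp add: p1_def)
  have p1a: "poly_mat p1 A = 0\<^sub>m n n" unfolding p1_def using q1 A by (simp add: pm_smult[OF A])
  have dimA: "dim_row A = n" using A by simp
  have minp1: "is_minimal_poly A p1"
    unfolding is_minimal_poly_def dimA
  proof (intro conjI allI impI p1m p1a)
    fix r assume "r \<noteq> 0 \<and> poly_mat r A = 0\<^sub>m n n"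
    then have "P (degree r)" by (auto simp: P_def)
    then have "Least P \<le> degree r" by (rule Least_le)
    then show "degree p1 \<le> degree r" using p1deg q1 by simp
  qed
  have uniq: "p = p1" if mp: "is_minimal_poly A p" for p
  proof (rule ccontr)
    assume ne: "p \<noteq> p1"
    have pm: "monic p" "poly_mat p A = 0\<^sub>m n n"
      and pmin: "\<forall>r. r \<noteq> 0 \<and> poly_mat r A = 0\<^sub>m n n \<longrightarrow> degree p \<le> degree r"
      using mp unfolding is_minimal_poly_def dimA by auto
    have p10: "p1 \<noteq> 0" using p1m by auto
    have p0: "p \<noteq> 0" using pm by auto
    have "degree p \<le> degree p1" using pmin p10 p1a by auto
    moreover have "degree p1 \<le> degree p" using minp1 p0 pm unfolding is_minimal_poly_def dimA by auto
    ultimately have deq: "degree p = degree p1" by simp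
    define r where "r = p - p1"
    have r0: "r \<noteq> 0" using ne unfolding r_def by simp
    have ra: "poly_mat r A = 0\<^sub>m n n" unfolding r_def using pm p1a A
      by (simp add: pm_minus[OF A])
    have "degree r \<le> degree p" unfolding r_def using degree_diff_le_max[of p p1] deq by simp
    moreover have "coeff r (degree p) = 0" unfolding r_def using pm p1m deq by simp
    ultimately have "degree r < degree p" using r0
      by (metis leading_coeff_0_iff le_neq_implies_less)
    moreover have "degree p \<le> degree r" using pmin r0 ra by auto
    ultimately show False by simp
  qed
  have "minimal_poly A = p1" unfolding minimal_poly_def using minp1 uniq by (rule the_equality)
  then have "char_poly A = p1" using nd by (simp add: non_derogative_def)
  then have "degree p1 = n" using degree_monic_char_poly[OF A] by simp
  moreover have "Least P \<le> degree q" using Pq by (rule Least_le)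
  ultimately show ?thesis using p1deg q1 by simp
qed

lemma cyclic_vec:
  assumes A: "A \<in> carrier_mat n n" and nd: "non_derogative A"
  shows "\<exists>v \<in> carrier_vec n. \<forall>q. q \<noteq> 0 \<longrightarrow> degree q < n \<longrightarrow> poly_mat q A *\<^sub>v v \<noteq> 0\<^sub>v n"
proof -
  obtain v g where v: "v \<in> carrier_vec n" and g: "gen A v g" "poly_mat g A = 0\<^sub>m n n"
    using cyclic_main[OF A] by auto
  have "n \<le> degree g" using nonderog_deg[OF A nd _ g(2)] g(1) unfolding gen_def by auto
  show ?thesis
  proof (intro bexI[OF _ v] allI impI)
    fix q :: "'a poly" assume q: "q \<noteq> 0" "degree q < n"
    show "poly_mat q A *\<^sub>v v \<noteq> 0\<^sub>v n"
    proof
      assume "poly_mat q A *\<^sub>v v = 0\<^sub>v n"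
      then have "ann A v q" using A by (simp add: ann_def)
      then have "g dvd q" using g(1) by (simp add: gen_def)
      then have "degree g \<le> degree q" using q(1) by (rule dvd_imp_degree_le)
      with \<open>n \<le> degree g\<close> q(2) show False by simp
    qed
  qed
qed

lemma mat_unit_vec:
  assumes X: "(X :: 'a :: field mat) \<in> carrier_mat m n" and j: "j < n"
  shows "X *\<^sub>v unit_vec n j = col X j"
proof (rule eq_vecI)
  fix i assume "i < dim_vec (col X j)"
  then have i: "i < m" using X by auto
  have "(X *\<^sub>v unit_vec n j) $ i = (\<Sum>l<n. X $$ (i, l) * (if l = j then 1 else 0))"
    using X i j by (simp add: scalar_prod_def atLeast0LessThan)
  also have "\<dots> = (\<Sum>l<n. if l = j then X $$ (i, l) else 0)" by (rule sum.cong) auto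
  also have "\<dots> = X $$ (i, j)" using j by (simp add: sum.delta)
  finally show "(X *\<^sub>v unit_vec n j) $ i = col X j $ i" using X i j by simp
qed (use X in auto)

lemma inj_inverse:
  assumes X: "(X :: 'a :: field mat) \<in> carrier_mat n n"
    and inj: "\<And>x. x \<in> carrier_vec n \<Longrightarrow> X *\<^sub>v x = 0\<^sub>v n \<Longrightarrow> x = 0\<^sub>v n"
  shows "\<exists>Y \<in> carrier_mat n n. X * Y = 1\<^sub>m n \<and> Y * X = 1\<^sub>m n"
proof -
  have "det X \<noteq> 0" using det_0_iff_vec_prod_zero_field[OF X] inj by auto
  from det_non_zero_imp_unit[OF X this, unfolded Units_def, of "()"]
  show ?thesis by (auto simp: ring_mat_def)
qed

lemma smult_one_mat_vec:
  assumes x: "(x :: 'a :: field vec) \<in> carrier_vec n"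
  shows "(s \<cdot>\<^sub>m 1\<^sub>m n) *\<^sub>v x = s \<cdot>\<^sub>v x"
proof (rule eq_vecI)
  fix i assume "i < dim_vec (s \<cdot>\<^sub>v x)"
  then have i: "i < n" using x by auto
  have "((s \<cdot>\<^sub>m 1\<^sub>m n) *\<^sub>v x) $ i = (\<Sum>l<n. s * (if l = i then 1 else 0) * x $ l)"
    using x i by (simp add: scalar_prod_def atLeast0LessThan)
  also have "\<dots> = (\<Sum>l<n. if l = i then s * x $ l else 0)" by (rule sum.cong) auto
  also have "\<dots> = s * x $ i" using i by (simp add: sum.delta)
  finally show "((s \<cdot>\<^sub>m 1\<^sub>m n) *\<^sub>v x) $ i = (s \<cdot>\<^sub>v x) $ i" using i x by simp
qed (use x in auto)

lemma shift_mat_vec: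
  assumes X: "(X :: 'a :: field mat) \<in> carrier_mat n n" and x: "x \<in> carrier_vec n"
  shows "(X - s \<cdot>\<^sub>m 1\<^sub>m n) *\<^sub>v x = X *\<^sub>v x - s \<cdot>\<^sub>v x"
  using X x by (simp add: minus_mult_distrib_mat_vec[of _ n n] smult_one_mat_vec)

lemma trace_comm:
  assumes X: "(X :: 'a :: field mat) \<in> carrier_mat n m" and Y: "Y \<in> carrier_mat m n"
  shows "mat_trace (X * Y) = mat_trace (Y * X)"
proof -
  have "mat_trace (X * Y) = (\<Sum>i<n. \<Sum>l<m. X $$ (i, l) * Y $$ (l, i))"
    unfolding mat_trace_def using X Y by (auto simp: scalar_prod_def atLeast0LessThan intro!: sum.cong)
  also have "\<dots> = (\<Sum>l<m. \<Sum>i<n. Y $$ (l, i) * X $$ (i, l))"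
    by (subst sum.swap) (simp add: mult.commute)
  also have "\<dots> = mat_trace (Y * X)"
    unfolding mat_trace_def using X Y by (auto simp: scalar_prod_def atLeast0LessThan intro!: sum.cong)
  finally show ?thesis .
qed

locale constr =
  fixes B :: "'a :: field mat" and n k :: nat and v :: "'a vec" and a c :: 'a
  assumes B: "B \<in> carrier_mat n n" and nk: "n = 4 * k + 1" and k1: "k \<ge> 1"
    and v: "v \<in> carrier_vec n"
    and cyc: "\<And>q. q \<noteq> 0 \<Longrightarrow> degree q < n \<Longrightarrow> poly_mat q B *\<^sub>v v \<noteq> 0\<^sub>v n"
    and ch2: "(1::'a) + 1 = 0" and a0: "a \<noteq> 0" and a1: "a \<noteq> 1"
    and tr: "mat_trace B = c"
begin

definition "lam (j::nat) = (if even j then c + a else c + a + 1)"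
definition "qp (j::nat) = (\<Prod>i<j. [:- lam i, 1:])"
definition "w (j::nat) = poly_mat (qp j) B *\<^sub>v v"
definition "W = mat n n (\<lambda>(i,j). w j $ i)"

lemma w_carrier[simp]: "w j \<in> carrier_vec n"
  unfolding w_def using B v by simp

lemma w_dim[simp]: "dim_vec (w j) = n"
  using w_carrier[of j] by (simp only: carrier_vec_def) simp

lemma W_carrier[simp]: "W \<in> carrier_mat n n"
  unfolding W_def by simp

lemma W_dims[simp]: "dim_row W = n" "dim_col W = n"
  unfolding W_def by auto

lemma W_col: "j < n \<Longrightarrow> col W j = w j"
  unfolding W_def by (rule eq_vecI) (use carrier_vecD[OF w_carrier[of j]] in auto)

lemma W_unit: "j < n \<Longrightarrow> W *\<^sub>v unit_vec n j = w j"
  using mat_unit_vec[OF W_carrier] W_col by simp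

lemma qp_Suc: "qp (Suc j) = [:- lam j, 1:] * qp j"
  unfolding qp_def by (simp add: mult.commute)

lemma qp_deg: "degree (qp j) = j \<and> lead_coeff (qp j) = 1"
proof (induct j)
  case 0
  then show ?case by (simp add: qp_def)
next
  case (Suc j)
  have nz: "qp j \<noteq> 0" using Suc by auto
  have d: "degree ([:- lam j, 1:] * qp j) = degree [:- lam j, 1:] + degree (qp j)"
    by (rule degree_mult_eq) (use nz in auto)
  have l: "lead_coeff ([:- lam j, 1:] * qp j) = lead_coeff [:- lam j, 1:] * lead_coeff (qp j)"
    by (rule lead_coeff_mult)
  have l1: "lead_coeff [:- lam j, 1:] = 1" by simp
  have d1: "degree [:- lam j, 1:] = 1" by simp
  have "degree (qp (Suc j)) = Suc j" unfolding qp_Suc d d1 using Suc by simp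
  moreover have "lead_coeff (qp (Suc j)) = 1" unfolding qp_Suc l l1 using Suc by auto
  ultimately show ?case by simp
qed

lemma w_Suc: "B *\<^sub>v w j = lam j \<cdot>\<^sub>v w j + w (Suc j)"
proof -
  have "w (Suc j) = (B - lam j \<cdot>\<^sub>m 1\<^sub>m n) *\<^sub>v w j"
    unfolding w_def qp_Suc pm_mult[OF B] pm_linear[OF B]
    by (rule assoc_mult_mat_vec[of _ n n _ n]) (use B v in auto)
  also have "\<dots> = B *\<^sub>v w j - lam j \<cdot>\<^sub>v w j" by (rule shift_mat_vec[OF B w_carrier])
  finally show ?thesis using B by (intro eq_vecI) auto
qed

lemma W_inj:
  assumes x: "x \<in> carrier_vec n" and Wx: "W *\<^sub>v x = 0\<^sub>v n"
  shows "x = 0\<^sub>v n"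
proof (rule ccontr)
  assume nx: "x \<noteq> 0\<^sub>v n"
  define p where "p = (\<Sum>j<n. Polynomial.smult (x $ j) (qp j))"
  have cp: "coeff p l = (\<Sum>j<n. x $ j * coeff (qp j) l)" for l
    unfolding p_def by (simp add: coeff_sum)
  have cq0: "coeff (qp j) l = 0" if "j < l" for j l using qp_deg[of j] that by (simp add: coeff_eq_0)
  have dp: "degree p < n"
  proof -
    have "degree p \<le> n - 1"
      by (rule degree_le) (auto simp: cp cq0 intro!: sum.neutral)
    then show ?thesis using nk by simp
  qed
  have "poly_mat p B *\<^sub>v v = W *\<^sub>v x"
  proof (rule eq_vecI)
    fix i assume "i < dim_vec (W *\<^sub>v x)"
    then have i: "i < n" by simp
    have "(poly_mat p B *\<^sub>v v) $ i = (\<Sum>l<n. coeff p l * (B ^\<^sub>m l *\<^sub>v v) $ i)"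
      by (rule pm_vec_index[OF B v i dp])
    also have "\<dots> = (\<Sum>l<n. \<Sum>j<n. x $ j * (coeff (qp j) l * (B ^\<^sub>m l *\<^sub>v v) $ i))"
      by (simp add: cp sum_distrib_right sum_distrib_left mult_ac)
    also have "\<dots> = (\<Sum>j<n. \<Sum>l<n. x $ j * (coeff (qp j) l * (B ^\<^sub>m l *\<^sub>v v) $ i))"
      by (rule sum.swap)
    also have "\<dots> = (\<Sum>j<n. x $ j * (\<Sum>l<n. coeff (qp j) l * (B ^\<^sub>m l *\<^sub>v v) $ i))"
      by (simp add: sum_distrib_left)
    also have "\<dots> = (\<Sum>j<n. x $ j * w j $ i)"
    proof (rule sum.cong)
      fix j assume "j \<in> {..<n}"
      then have "degree (qp j) < n" using qp_deg[of j] by simp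
      then show "x $ j * (\<Sum>l<n. coeff (qp j) l * (B ^\<^sub>m l *\<^sub>v v) $ i) = x $ j * w j $ i"
        unfolding w_def using pm_vec_index[OF B v i] by simp
    qed simp
    also have "\<dots> = (W *\<^sub>v x) $ i"
      using i x unfolding W_def by (auto simp: scalar_prod_def atLeast0LessThan mult.commute intro!: sum.cong)
    finally show "(poly_mat p B *\<^sub>v v) $ i = (W *\<^sub>v x) $ i" .
  qed (use B in simp)
  then have "p = 0" using cyc[of p] dp Wx by auto
  define J where "J = Max {j. j < n \<and> x $ j \<noteq> 0}"
  have ex: "\<exists>j. j < n \<and> x $ j \<noteq> 0"
  proof (rule ccontr)
    assume "\<not> ?thesis"
    then have "x = 0\<^sub>v n" by (intro eq_vecI) (use x in auto)
    with nx show False by simp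
  qed
  have fin: "finite {j. j < n \<and> x $ j \<noteq> 0}" by simp
  have J: "J < n" "x $ J \<noteq> 0" using Max_in[OF fin] ex unfolding J_def by auto
  have Jmax: "x $ j = 0" if "J < j" "j < n" for j
  proof (rule ccontr)
    assume "x $ j \<noteq> 0"
    then have "j \<le> J" using Max_ge[OF fin, of j] that unfolding J_def by blast
    with that show False by simp
  qed
  have "coeff p J = (\<Sum>j<n. if j = J then x $ j else 0)"
    unfolding cp
  proof (rule sum.cong)
    fix j assume j: "j \<in> {..<n}"
    show "x $ j * coeff (qp j) J = (if j = J then x $ j else 0)"
    proof (cases "j < J")
      case True then show ?thesis using qp_deg[of j] by (simp add: coeff_eq_0)
    next
      case False then show ?thesis using Jmax[of j] j qp_deg[of J] by (cases "j = J") auto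
    qed
  qed simp
  also have "\<dots> = x $ J" using J by (simp add: sum.delta)
  finally have "coeff p J \<noteq> 0" using J by simp
  with \<open>p = 0\<close> show False by simp
qed


end

context constr
begin

lemma dbl: "x + x = (0::'a)"
proof -
  have "x + x = (1 + 1) * x" by (simp add: distrib_right)
  then show ?thesis using ch2 by simp
qed

lemma neg_eq: "- x = (x::'a)"
  using dbl[of x] eq_neg_iff_add_eq_0[of x x] by simp

definition "Wi = (SOME Y. Y \<in> carrier_mat n n \<and> W * Y = 1\<^sub>m n \<and> Y * W = 1\<^sub>m n)"

lemma Wi: "Wi \<in> carrier_mat n n" "W * Wi = 1\<^sub>m n" "Wi * W = 1\<^sub>m n"
proof -
  have "\<exists>Y. Y \<in> carrier_mat n n \<and> W * Y = 1\<^sub>m n \<and> Y * W = 1\<^sub>m n"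
    using inj_inverse[OF W_carrier W_inj] by blast
  from someI_ex[OF this] show "Wi \<in> carrier_mat n n" "W * Wi = 1\<^sub>m n" "Wi * W = 1\<^sub>m n"
    unfolding Wi_def by auto
qed

lemma Wi_w: "j < n \<Longrightarrow> Wi *\<^sub>v w j = unit_vec n j"
proof -
  assume j: "j < n"
  have "Wi *\<^sub>v w j = Wi *\<^sub>v (W *\<^sub>v unit_vec n j)" using W_unit[OF j] by simp
  also have "\<dots> = (Wi * W) *\<^sub>v unit_vec n j"
    by (rule assoc_mult_mat_vec[symmetric, of _ n n _ n]) (use Wi in auto)
  also have "(Wi * W) *\<^sub>v unit_vec n j = unit_vec n j" using Wi by simp
  finally show ?thesis .
qed

lemma W_Wi_vec: "y \<in> carrier_vec n \<Longrightarrow> W *\<^sub>v (Wi *\<^sub>v y) = y"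
proof -
  assume y: "y \<in> carrier_vec n"
  have "W *\<^sub>v (Wi *\<^sub>v y) = (W * Wi) *\<^sub>v y" by (rule assoc_mult_mat_vec[symmetric, OF W_carrier Wi(1) y])
  then show ?thesis using Wi y by simp
qed

lemma Wi_W_vec: "y \<in> carrier_vec n \<Longrightarrow> Wi *\<^sub>v (W *\<^sub>v y) = y"
proof -
  assume y: "y \<in> carrier_vec n"
  have "Wi *\<^sub>v (W *\<^sub>v y) = (Wi * W) *\<^sub>v y" by (rule assoc_mult_mat_vec[symmetric, OF Wi(1) W_carrier y])
  then show ?thesis using Wi y by simp
qed

lemma mv_carrier[simp]: "W *\<^sub>v x \<in> carrier_vec n" "Wi *\<^sub>v x \<in> carrier_vec n" "B *\<^sub>v x \<in> carrier_vec n"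
  by (rule carrier_vecI, simp add: carrier_matD[OF Wi(1)] carrier_matD[OF B])+

definition "r = Wi *\<^sub>v (B *\<^sub>v w (n - 1))"

lemma r_carrier[simp]: "r \<in> carrier_vec n"
  unfolding r_def using Wi B by simp

lemma Bw_last: "B *\<^sub>v w (n - 1) = W *\<^sub>v r"
  unfolding r_def using B by (simp add: W_Wi_vec)


lemma lam_sum: "(\<Sum>j<4 * m. lam j) = 0"
proof (induct m)
  case 0
  then show ?case by simp
next
  case (Suc m)
  have e: "4 * Suc m = Suc (Suc (Suc (Suc (4 * m))))" by simp
  have "(\<Sum>j<4 * Suc m. lam j) = (\<Sum>j<4 * m. lam j) + lam (4*m) + lam (Suc (4*m)) + lam (Suc (Suc (4*m)))
     + lam (Suc (Suc (Suc (4*m))))"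
    unfolding e by simp
  also have "\<dots> = (c + a) + (c + a + 1) + (c + a) + (c + a + 1)"
    using Suc by (simp add: lam_def)
  also have "\<dots> = 0"
  proof -
    have "\<And>x y. x + y + x + (y::'a) = (x + x) + (y + y)" by (simp add: ac_simps)
    then have "(c + a) + (c + a + 1) + (c + a) + (c + a + 1) = ((c + a) + (c + a)) + ((c + a + 1) + (c + a + 1))" .
    then show ?thesis by (simp only: dbl add_0_left)
  qed
  finally show ?case .
qed

lemma Wi_Bw: "j < n - 1 \<Longrightarrow> Wi *\<^sub>v (B *\<^sub>v w j) = lam j \<cdot>\<^sub>v unit_vec n j + unit_vec n (Suc j)"
proof -
  assume j: "j < n - 1"
  have "Wi *\<^sub>v (B *\<^sub>v w j) = Wi *\<^sub>v (lam j \<cdot>\<^sub>v w j) + Wi *\<^sub>v w (Suc j)"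
    unfolding w_Suc using Wi by (simp add: mult_add_distrib_mat_vec[of _ n n])
  also have "\<dots> = lam j \<cdot>\<^sub>v unit_vec n j + unit_vec n (Suc j)"
    using Wi j by (simp add: mult_mat_vec[of _ n n] Wi_w)
  finally show ?thesis .
qed

lemma r_last: "r $ (n - 1) = c"
proof -
  define M where "M = Wi * B * W"
  have M: "M \<in> carrier_mat n n" unfolding M_def
    using mult_carrier_mat[OF mult_carrier_mat[OF Wi(1) B] W_carrier] .
  have "W * (Wi * B) = (W * Wi) * B" by (rule assoc_mult_mat[symmetric, OF W_carrier Wi(1) B])
  then have "W * (Wi * B) = B" using Wi B by simp
  then have "c = mat_trace (W * (Wi * B))" using tr by simp
  also have "\<dots> = mat_trace (Wi * B * W)" by (rule trace_comm) (use Wi B in auto)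
  finally have cM: "c = mat_trace M" unfolding M_def .
  have Mjj: "M $$ (j, j) = (Wi *\<^sub>v (B *\<^sub>v w j)) $ j" if j: "j < n" for j
  proof -
    have "M $$ (j, j) = (M *\<^sub>v unit_vec n j) $ j" using mat_unit_vec[OF M j] M j by simp
    also have "M *\<^sub>v unit_vec n j = Wi *\<^sub>v (B *\<^sub>v (W *\<^sub>v unit_vec n j))"
    proof -
      have WB: "Wi * B \<in> carrier_mat n n" using mult_carrier_mat[OF Wi(1) B] .
      have "M *\<^sub>v unit_vec n j = (Wi * B) *\<^sub>v (W *\<^sub>v unit_vec n j)"
        unfolding M_def by (rule assoc_mult_mat_vec[OF WB W_carrier]) simp
      also have "\<dots> = Wi *\<^sub>v (B *\<^sub>v (W *\<^sub>v unit_vec n j))"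
        by (rule assoc_mult_mat_vec[OF Wi(1) B]) simp
      finally show ?thesis .
    qed
    finally show ?thesis using W_unit[OF j] by simp
  qed
  have n1: "n = Suc (4 * k)" using nk by simp
  have "mat_trace M = (\<Sum>j<n. M $$ (j, j))" unfolding mat_trace_def using M by simp
  also have "\<dots> = (\<Sum>j<4 * k. M $$ (j, j)) + M $$ (4 * k, 4 * k)" unfolding n1 by simp
  also have "(\<Sum>j<4 * k. M $$ (j, j)) = (\<Sum>j<4 * k. lam j)"
  proof (rule sum.cong)
    fix j assume "j \<in> {..<4 * k}"
    then have j: "j < n - 1" using n1 by simp
    show "M $$ (j, j) = lam j" using Mjj[of j] j Wi_Bw[OF j] by simp
  qed simp
  also have "M $$ (4 * k, 4 * k) = r $ (n - 1)" using Mjj[of "4 * k"] n1 unfolding r_def by simp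
  finally show ?thesis using cM lam_sum[of k] n1 by simp
qed


definition "N0 = mat n n (\<lambda>(i,j). if odd j \<and> i = Suc j then (1::'a) else 0)"
definition "N = W * N0 * Wi"
definition "D = B - N"
definition "al = c + a"
definition "be = c + a + 1"

lemma N0_carrier[simp]: "N0 \<in> carrier_mat n n" unfolding N0_def by simp
lemma N_carrier[simp]: "N \<in> carrier_mat n n"
  unfolding N_def using mult_carrier_mat[OF mult_carrier_mat[OF W_carrier N0_carrier] Wi(1)] .
lemma D_carrier[simp]: "D \<in> carrier_mat n n" unfolding D_def using minus_carrier_mat[OF N_carrier] B by simp

lemma N0_dims[simp]: "dim_row N0 = n" "dim_col N0 = n" unfolding N0_def by auto

lemma mv_carrier2[simp]: "N *\<^sub>v x \<in> carrier_vec n" "D *\<^sub>v x \<in> carrier_vec n" "N0 *\<^sub>v x \<in> carrier_vec n"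
  by (rule carrier_vecI, simp add: carrier_matD[OF N_carrier] carrier_matD[OF D_carrier] carrier_matD[OF N0_carrier])+

lemma n_last: "n - 1 = 4 * k" "even (n - 1)" "n - 1 < n" using nk by auto

lemma odd_lt: "odd j \<Longrightarrow> j < n \<Longrightarrow> Suc j < n"
proof -
  assume j: "odd j" "j < n"
  then have "j \<noteq> n - 1" using n_last(2) by auto
  then show "Suc j < n" using j by linarith
qed

lemma N0_sq: "N0 * N0 = 0\<^sub>m n n"
proof (rule eq_matI)
  fix i j assume ij: "i < dim_row (0\<^sub>m n n :: 'a mat)" "j < dim_col (0\<^sub>m n n :: 'a mat)"
  then have ij: "i < n" "j < n" by auto
  have "(N0 * N0) $$ (i, j) = (\<Sum>l<n. N0 $$ (i, l) * N0 $$ (l, j))"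
    using ij by (simp add: scalar_prod_def atLeast0LessThan)
  also have "\<dots> = 0"
    by (rule sum.neutral) (use ij in \<open>auto simp: N0_def\<close>)
  finally show "(N0 * N0) $$ (i, j) = 0\<^sub>m n n $$ (i, j)" using ij by simp
qed auto

lemma N_sq: "N * N = 0\<^sub>m n n"
proof -
  have c1: "N0 * Wi \<in> carrier_mat n n" using mult_carrier_mat[OF N0_carrier Wi(1)] .
  have c2: "W * (N0 * Wi) \<in> carrier_mat n n" using mult_carrier_mat[OF W_carrier c1] .
  have c3: "W * N0 \<in> carrier_mat n n" using mult_carrier_mat[OF W_carrier N0_carrier] .
  have e1: "N = W * (N0 * Wi)" unfolding N_def by (rule assoc_mult_mat[OF W_carrier N0_carrier Wi(1)])
  have "N * N = W * ((N0 * Wi) * (W * (N0 * Wi)))" unfolding e1 by (rule assoc_mult_mat[OF W_carrier c1 c2])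
  also have "(N0 * Wi) * (W * (N0 * Wi)) = N0 * (Wi * (W * (N0 * Wi)))"
    by (rule assoc_mult_mat[OF N0_carrier Wi(1) c2])
  also have "Wi * (W * (N0 * Wi)) = (Wi * W) * (N0 * Wi)"
    by (rule assoc_mult_mat[symmetric, OF Wi(1) W_carrier c1])
  also have "(Wi * W) * (N0 * Wi) = N0 * Wi" using Wi c1 by simp
  also have "N0 * (N0 * Wi) = (N0 * N0) * Wi" by (rule assoc_mult_mat[symmetric, OF N0_carrier N0_carrier Wi(1)])
  also have "(N0 * N0) * Wi = 0\<^sub>m n n" unfolding N0_sq using Wi by simp
  finally show ?thesis by simp
qed

lemma N0_unit: "j < n \<Longrightarrow> N0 *\<^sub>v unit_vec n j = (if odd j then unit_vec n (Suc j) else 0\<^sub>v n)"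
  by (subst mat_unit_vec[OF N0_carrier], simp, rule eq_vecI) (auto simp: N0_def unit_vec_def odd_lt)

lemma N_w: "j < n \<Longrightarrow> N *\<^sub>v w j = (if odd j then w (Suc j) else 0\<^sub>v n)"
proof -
  assume j: "j < n"
  have WN: "W * N0 \<in> carrier_mat n n" using mult_carrier_mat[OF W_carrier N0_carrier] .
  have "N *\<^sub>v w j = (W * N0) *\<^sub>v (Wi *\<^sub>v w j)"
    unfolding N_def by (rule assoc_mult_mat_vec[OF WN Wi(1)]) simp
  also have "\<dots> = W *\<^sub>v (N0 *\<^sub>v unit_vec n j)"
    unfolding Wi_w[OF j] by (rule assoc_mult_mat_vec[OF W_carrier N0_carrier]) simp
  also have "\<dots> = (if odd j then w (Suc j) else 0\<^sub>v n)"
    using N0_unit[OF j] W_unit[OF odd_lt[OF _ j]] by (auto simp: mat_vec_zero[OF W_carrier])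
  finally show ?thesis .
qed

lemma D_w: "j < n \<Longrightarrow> D *\<^sub>v w j = B *\<^sub>v w j - N *\<^sub>v w j"
  unfolding D_def using B by (simp add: minus_mult_distrib_mat_vec[of _ n n])

lemma D_w_odd: "odd j \<Longrightarrow> j < n \<Longrightarrow> D *\<^sub>v w j = be \<cdot>\<^sub>v w j"
  unfolding D_w N_w w_Suc by (rule eq_vecI) (auto simp: lam_def be_def)

lemma D_w_even: "even j \<Longrightarrow> j < n - 1 \<Longrightarrow> D *\<^sub>v w j = al \<cdot>\<^sub>v w j + w (Suc j)"
  using D_w[of j] N_w[of j] w_Suc[of j] by (intro eq_vecI) (auto simp: lam_def al_def)

lemma D_w_last: "D *\<^sub>v w (n - 1) = W *\<^sub>v r"
  using D_w[of "n - 1"] N_w[of "n - 1"] Bw_last n_last(2,3) by (intro eq_vecI) auto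

end

context constr
begin

definition "Pal = D - al \<cdot>\<^sub>m 1\<^sub>m n"
definition "Pbe = D - be \<cdot>\<^sub>m 1\<^sub>m n"
definition "Pc = D - c \<cdot>\<^sub>m 1\<^sub>m n"
definition "Q = Pal * Pbe"

lemma P_carrier[simp]: "Pal \<in> carrier_mat n n" "Pbe \<in> carrier_mat n n" "Pc \<in> carrier_mat n n"
  "Q \<in> carrier_mat n n"
  unfolding Pal_def Pbe_def Pc_def Q_def
  using minus_carrier_mat[of "al \<cdot>\<^sub>m 1\<^sub>m n" n n D] minus_carrier_mat[of "be \<cdot>\<^sub>m 1\<^sub>m n" n n D]
    minus_carrier_mat[of "c \<cdot>\<^sub>m 1\<^sub>m n" n n D] by (auto intro!: mult_carrier_mat[of _ n n])

lemma dims3[simp]: "dim_row Q = n" "dim_col Q = n" "dim_row D = n" "dim_col D = n"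
  "dim_row Pc = n" "dim_col Pc = n" "dim_row Pal = n" "dim_col Pal = n"
  using carrier_matD[OF P_carrier(4)] carrier_matD[OF D_carrier] carrier_matD[OF P_carrier(3)]
    carrier_matD[OF P_carrier(1)] by auto

lemma mv_carrier3[simp]: "Pal *\<^sub>v x \<in> carrier_vec n" "Pbe *\<^sub>v x \<in> carrier_vec n"
  "Pc *\<^sub>v x \<in> carrier_vec n" "Q *\<^sub>v x \<in> carrier_vec n"
  by (rule carrier_vecI, simp add: carrier_matD[OF P_carrier(1)] carrier_matD[OF P_carrier(2)]
      carrier_matD[OF P_carrier(3)] carrier_matD[OF P_carrier(4)])+

lemma be_al: "be = al + 1" unfolding be_def al_def by simp

lemma Pal_v: "x \<in> carrier_vec n \<Longrightarrow> Pal *\<^sub>v x = D *\<^sub>v x - al \<cdot>\<^sub>v x"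
  unfolding Pal_def by (rule shift_mat_vec[OF D_carrier])
lemma Pbe_v: "x \<in> carrier_vec n \<Longrightarrow> Pbe *\<^sub>v x = D *\<^sub>v x - be \<cdot>\<^sub>v x"
  unfolding Pbe_def by (rule shift_mat_vec[OF D_carrier])
lemma Pc_v: "x \<in> carrier_vec n \<Longrightarrow> Pc *\<^sub>v x = D *\<^sub>v x - c \<cdot>\<^sub>v x"
  unfolding Pc_def by (rule shift_mat_vec[OF D_carrier])

lemma Q_v: "x \<in> carrier_vec n \<Longrightarrow> Q *\<^sub>v x = Pal *\<^sub>v (Pbe *\<^sub>v x)"
  unfolding Q_def by (rule assoc_mult_mat_vec[OF P_carrier(1) P_carrier(2)])

lemma PcQ: "Pc * Q = Q * Pc"
proof -
  have q: "Q = poly_mat ([:- al, 1:] * [:- be, 1:]) D"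
    unfolding Q_def Pal_def Pbe_def pm_mult[OF D_carrier] pm_linear[OF D_carrier] ..
  have p: "Pc = poly_mat [:- c, 1:] D" unfolding Pc_def pm_linear[OF D_carrier] ..
  have "Pc * Q = poly_mat ([:- c, 1:] * ([:- al, 1:] * [:- be, 1:])) D"
    unfolding p q pm_mult[OF D_carrier] ..
  also have "\<dots> = poly_mat (([:- al, 1:] * [:- be, 1:]) * [:- c, 1:]) D" by (simp only: mult.commute)
  also have "\<dots> = Q * Pc" unfolding p q pm_mult[OF D_carrier] ..
  finally show ?thesis .
qed

lemma two0: "(2::'a) = 0" using ch2 one_add_one[where 'a='a] by simp

lemma scal1: "al * x + y + be * y - al * (x + y) = (0::'a)"
proof -
  have "al * x + y + (al + 1) * y - al * (x + y) = y + y" by (simp add: algebra_simps)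
  then show ?thesis unfolding be_al dbl .
qed

lemma scal2: "al * x + y - be * x = x + (y::'a)"
proof -
  have "al * x + y - (al + 1) * x = y - x" by (simp add: algebra_simps)
  also have "\<dots> = x + y" using neg_eq[of x] by (simp add: algebra_simps)
  finally show ?thesis unfolding be_al .
qed

lemma Q_w: "j < n - 1 \<Longrightarrow> Q *\<^sub>v w j = 0\<^sub>v n"
proof -
  assume j: "j < n - 1"
  show ?thesis
  proof (cases "odd j")
    case True
    have jn: "j < n" using j by simp
    have "Pbe *\<^sub>v w j = 0\<^sub>v n" unfolding Pbe_v[OF w_carrier] D_w_odd[OF True jn] using j
      by (intro eq_vecI) auto
    then show ?thesis unfolding Q_v[OF w_carrier] by (simp add: mat_vec_zero[OF P_carrier(1)])
  next
    case False
    have sj: "odd (Suc j)" "Suc j < n" using False j by auto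
    have evj: "even j" using False by simp
    have "Pbe *\<^sub>v w j = w j + w (Suc j)" unfolding Pbe_v[OF w_carrier] D_w_even[OF evj j] using False
      by (intro eq_vecI) (auto simp: scal2)
    moreover have "Pal *\<^sub>v (w j + w (Suc j)) = 0\<^sub>v n"
    proof -
      have "D *\<^sub>v (w j + w (Suc j)) = D *\<^sub>v w j + D *\<^sub>v w (Suc j)"
        by (rule mult_add_distrib_mat_vec[OF D_carrier]) auto
      then show ?thesis unfolding Pal_v[OF add_carrier_vec[OF w_carrier w_carrier]]
        using D_w_even[OF evj j] D_w_odd[OF sj] False
        by (intro eq_vecI) (auto simp: scal1)
    qed
    ultimately show ?thesis unfolding Q_v[OF w_carrier] by simp
  qed
qed


definition "z j = (if j = n - 1 then Q *\<^sub>v w (n - 1) else if odd j then w j else w j + w (Suc j))"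
definition "d j = (if j = n - 1 then c else if odd j then be else al)"

lemma z_carrier[simp]: "z j \<in> carrier_vec n" unfolding z_def by auto
lemma z_dim[simp]: "dim_vec (z j) = n" using z_carrier[of j] by (simp only: carrier_vec_def) simp

lemma QW_zero:
  assumes y: "y \<in> carrier_vec n" and y0: "y $ (n - 1) = 0"
  shows "Q *\<^sub>v (W *\<^sub>v y) = 0\<^sub>v n"
proof -
  have QW: "Q * W \<in> carrier_mat n n" using mult_carrier_mat[OF P_carrier(4) W_carrier] .
  have "Q *\<^sub>v (W *\<^sub>v y) = (Q * W) *\<^sub>v y"
    by (rule assoc_mult_mat_vec[symmetric, OF P_carrier(4) W_carrier y])
  also have "\<dots> = 0\<^sub>v n"
  proof (rule eq_vecI)
    fix i assume "i < dim_vec (0\<^sub>v n :: 'a vec)"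
    then have i: "i < n" by simp
    have dQW: "dim_row (Q * W) = n" "dim_col (Q * W) = n" using QW by auto
    have dy: "dim_vec y = n" using y by auto
    have "((Q * W) *\<^sub>v y) $ i = row (Q * W) i \<bullet> y" using i dQW by simp
    also have "\<dots> = (\<Sum>l<n. (Q * W) $$ (i, l) * y $ l)"
      unfolding scalar_prod_def dy atLeast0LessThan using i dQW by (intro sum.cong) auto
    finally have "((Q * W) *\<^sub>v y) $ i = (\<Sum>l<n. (Q * W) $$ (i, l) * y $ l)" .
    also have "\<dots> = 0"
    proof (rule sum.neutral, rule ballI)
      fix l assume "l \<in> {..<n}"
      then have l: "l < n" by simp
      have "(Q * W) $$ (i, l) = (Q *\<^sub>v w l) $ i"
        using i l P_carrier(4) by (simp add: W_col[OF l, symmetric])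
      then show "(Q * W) $$ (i, l) * y $ l = 0"
      proof (cases "l = n - 1")
        case True then show ?thesis using y0 by simp
      next
        case False
        then have "l < n - 1" using l by simp
        then show ?thesis using \<open>(Q * W) $$ (i, l) = (Q *\<^sub>v w l) $ i\<close> Q_w i by simp
      qed
    qed
    finally show "((Q * W) *\<^sub>v y) $ i = 0\<^sub>v n $ i" using i by simp
  qed simp
  finally show ?thesis .
qed

lemma D_z: "j < n \<Longrightarrow> D *\<^sub>v z j = d j \<cdot>\<^sub>v z j"
proof -
  assume j: "j < n"
  show ?thesis
  proof (cases "j = n - 1")
    case True
    have wl: "w (n - 1) \<in> carrier_vec n" by simp
    define y where "y = r - c \<cdot>\<^sub>v unit_vec n (n - 1)"
    have y: "y \<in> carrier_vec n" unfolding y_def by simp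
    have y0: "y $ (n - 1) = 0" unfolding y_def using r_last n_last(3) by simp
    have Wy: "W *\<^sub>v y = W *\<^sub>v r - c \<cdot>\<^sub>v w (n - 1)"
    proof -
      have "W *\<^sub>v y = W *\<^sub>v r - W *\<^sub>v (c \<cdot>\<^sub>v unit_vec n (n - 1))"
        unfolding y_def by (rule mult_minus_distrib_mat_vec[OF W_carrier]) auto
      also have "W *\<^sub>v (c \<cdot>\<^sub>v unit_vec n (n - 1)) = c \<cdot>\<^sub>v w (n - 1)"
        using mult_mat_vec[OF W_carrier unit_vec_carrier, of c "n - 1"] W_unit[OF n_last(3)] by simp
      finally show ?thesis .
    qed
    have zl: "z j = Q *\<^sub>v w (n - 1)" unfolding z_def True by simp
    have "Pc *\<^sub>v z j = (Pc * Q) *\<^sub>v w (n - 1)"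
      unfolding zl by (rule assoc_mult_mat_vec[symmetric, OF P_carrier(3) P_carrier(4) wl])
    also have "\<dots> = Q *\<^sub>v (Pc *\<^sub>v w (n - 1))"
      unfolding PcQ by (rule assoc_mult_mat_vec[OF P_carrier(4) P_carrier(3) wl])
    also have "Pc *\<^sub>v w (n - 1) = W *\<^sub>v y"
      unfolding Pc_v[OF wl] D_w_last Wy ..
    also have "Q *\<^sub>v (W *\<^sub>v y) = 0\<^sub>v n" by (rule QW_zero[OF y y0])
    finally have "Pc *\<^sub>v z j = 0\<^sub>v n" .
    then have eq: "D *\<^sub>v z j - c \<cdot>\<^sub>v z j = 0\<^sub>v n" unfolding Pc_v[OF z_carrier] .
    have dj: "d j = c" unfolding d_def using True by simp
    show ?thesis unfolding dj
    proof (rule eq_vecI)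
      fix i assume "i < dim_vec (c \<cdot>\<^sub>v z j)"
      then have i: "i < n" by simp
      from arg_cong[OF eq, of "\<lambda>x. x $ i"] have "(D *\<^sub>v z j) $ i - c * z j $ i = 0" using i by simp
      then show "(D *\<^sub>v z j) $ i = (c \<cdot>\<^sub>v z j) $ i" using i by simp
    qed simp
  next
    case False
    then have j1: "j < n - 1" using j by simp
    show ?thesis
    proof (cases "odd j")
      case True
      then show ?thesis unfolding z_def d_def using False D_w_odd[OF True j] by simp
    next
      case ev: False
      have sj: "odd (Suc j)" "Suc j < n" using ev j1 by auto
      have "D *\<^sub>v (w j + w (Suc j)) = D *\<^sub>v w j + D *\<^sub>v w (Suc j)"
        by (rule mult_add_distrib_mat_vec[OF D_carrier]) auto
      also have "\<dots> = al \<cdot>\<^sub>v (w j + w (Suc j))"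
        using D_w_even[of j] D_w_odd[OF sj] ev j1
      proof (intro eq_vecI)
        fix i assume "i < dim_vec (al \<cdot>\<^sub>v (w j + w (Suc j)))"
        then have i: "i < n" by simp
        have "al * w j $ i + w (Suc j) $ i + be * w (Suc j) $ i = al * (w j $ i + w (Suc j) $ i)"
        proof -
          have "al * w j $ i + w (Suc j) $ i + (al + 1) * w (Suc j) $ i
              = al * (w j $ i + w (Suc j) $ i) + (w (Suc j) $ i + w (Suc j) $ i)"
            by (simp add: algebra_simps)
          then show ?thesis unfolding be_al dbl by simp
        qed
        then show "(D *\<^sub>v w j + D *\<^sub>v w (Suc j)) $ i = (al \<cdot>\<^sub>v (w j + w (Suc j))) $ i"
          using D_w_even[of j] D_w_odd[OF sj] ev j1 i by simp
      qed simp
      finally show ?thesis unfolding z_def d_def using False ev by simp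
    qed
  qed
qed


lemma Wi_v_dim[simp]: "dim_vec (Wi *\<^sub>v x) = n" using Wi(1) by simp

lemma phi_Pal:
  assumes y: "y \<in> carrier_vec n"
  shows "(Wi *\<^sub>v (Pal *\<^sub>v (W *\<^sub>v y))) $ (n - 1) = (c - al) * y $ (n - 1)"
proof -
  define R where "R = Wi * Pal * W"
  have R: "R \<in> carrier_mat n n" unfolding R_def
    using mult_carrier_mat[OF mult_carrier_mat[OF Wi(1) P_carrier(1)] W_carrier] .
  have WP: "Wi * Pal \<in> carrier_mat n n" using mult_carrier_mat[OF Wi(1) P_carrier(1)] .
  have Rv: "R *\<^sub>v x = Wi *\<^sub>v (Pal *\<^sub>v (W *\<^sub>v x))" if x: "x \<in> carrier_vec n" for x
  proof -
    have "R *\<^sub>v x = (Wi * Pal) *\<^sub>v (W *\<^sub>v x)" unfolding R_def by (rule assoc_mult_mat_vec[OF WP W_carrier x])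
    also have "\<dots> = Wi *\<^sub>v (Pal *\<^sub>v (W *\<^sub>v x))" by (rule assoc_mult_mat_vec[OF Wi(1) P_carrier(1)]) simp
    finally show ?thesis .
  qed
  have Rrow: "R $$ (n - 1, j) = (if j = n - 1 then c - al else 0)" if j: "j < n" for j
  proof -
    have "R $$ (n - 1, j) = (R *\<^sub>v unit_vec n j) $ (n - 1)"
      using mat_unit_vec[OF R j] R j n_last(3) by simp
    also have "\<dots> = (Wi *\<^sub>v (Pal *\<^sub>v w j)) $ (n - 1)" using Rv[of "unit_vec n j"] W_unit[OF j] by simp
    also have "\<dots> = (if j = n - 1 then c - al else 0)"
    proof (cases "j = n - 1")
      case True
      have "Pal *\<^sub>v w j = W *\<^sub>v (r - al \<cdot>\<^sub>v unit_vec n (n - 1))"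
      proof -
        have "W *\<^sub>v (r - al \<cdot>\<^sub>v unit_vec n (n - 1)) = W *\<^sub>v r - W *\<^sub>v (al \<cdot>\<^sub>v unit_vec n (n - 1))"
          by (rule mult_minus_distrib_mat_vec[OF W_carrier]) auto
        also have "W *\<^sub>v (al \<cdot>\<^sub>v unit_vec n (n - 1)) = al \<cdot>\<^sub>v w (n - 1)"
          using mult_mat_vec[OF W_carrier unit_vec_carrier, of al "n - 1"] W_unit[OF n_last(3)] by simp
        finally show ?thesis unfolding Pal_v[OF w_carrier] True D_w_last by simp
      qed
      then have "Wi *\<^sub>v (Pal *\<^sub>v w j) = r - al \<cdot>\<^sub>v unit_vec n (n - 1)" by (simp add: Wi_W_vec)
      then show ?thesis using True r_last n_last(3) by simp
    next
      case False
      then have j1: "j < n - 1" using j by simp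
      show ?thesis
      proof (cases "odd j")
        case True
        have "Pal *\<^sub>v w j = w j" unfolding Pal_v[OF w_carrier] D_w_odd[OF True j]
          by (intro eq_vecI) (auto simp: be_al algebra_simps)
        then show ?thesis using Wi_w[OF j] False j by simp
      next
        case ev: False
        have sj1: "Suc j \<noteq> n - 1"
        proof
          assume "Suc j = n - 1"
          then have "even (Suc j)" using n_last(2) by simp
          with ev show False by simp
        qed
        have sj: "Suc j < n" "Suc j \<noteq> n - 1" using j1 sj1 by auto
        have evj: "even j" using ev by simp
        have "Pal *\<^sub>v w j = w (Suc j)" unfolding Pal_v[OF w_carrier] D_w_even[OF evj j1]
          by (intro eq_vecI) auto
        then show ?thesis using Wi_w[OF sj(1)] False sj n_last(3) by simp
      qed
    qed
    finally show ?thesis .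
  qed
  have "(Wi *\<^sub>v (Pal *\<^sub>v (W *\<^sub>v y))) $ (n - 1) = (R *\<^sub>v y) $ (n - 1)" using Rv[OF y] by simp
  also have "\<dots> = (\<Sum>j<n. R $$ (n - 1, j) * y $ j)"
  proof -
    have dR: "dim_row R = n" "dim_col R = n" using R by auto
    have dy: "dim_vec y = n" using y by auto
    have "(R *\<^sub>v y) $ (n - 1) = row R (n - 1) \<bullet> y" using n_last(3) dR by simp
    also have "\<dots> = (\<Sum>j<n. R $$ (n - 1, j) * y $ j)"
      unfolding scalar_prod_def dy atLeast0LessThan using n_last(3) dR by (intro sum.cong) auto
    finally show ?thesis .
  qed
  also have "\<dots> = (\<Sum>j<n. if j = n - 1 then (c - al) * y $ j else 0)"
  proof (rule sum.cong)
    fix j assume "j \<in> {..<n}"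
    then have j: "j < n" by simp
    show "R $$ (n - 1, j) * y $ j = (if j = n - 1 then (c - al) * y $ j else 0)"
      unfolding Rrow[OF j] by simp
  qed simp
  also have "\<dots> = (c - al) * y $ (n - 1)" using n_last(3) by (simp add: sum.delta)
  finally show ?thesis .
qed

lemma s_last: "(Wi *\<^sub>v z (n - 1)) $ (n - 1) = (c - al) * (c - be)"
proof -
  define y1 where "y1 = r - be \<cdot>\<^sub>v unit_vec n (n - 1)"
  have y1: "y1 \<in> carrier_vec n" unfolding y1_def by simp
  have "Pbe *\<^sub>v w (n - 1) = W *\<^sub>v y1"
  proof -
    have "W *\<^sub>v y1 = W *\<^sub>v r - W *\<^sub>v (be \<cdot>\<^sub>v unit_vec n (n - 1))"
      unfolding y1_def by (rule mult_minus_distrib_mat_vec[OF W_carrier]) auto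
    also have "W *\<^sub>v (be \<cdot>\<^sub>v unit_vec n (n - 1)) = be \<cdot>\<^sub>v w (n - 1)"
      using mult_mat_vec[OF W_carrier unit_vec_carrier, of be "n - 1"] W_unit[OF n_last(3)] by simp
    finally show ?thesis unfolding Pbe_v[OF w_carrier] D_w_last by simp
  qed
  then have "z (n - 1) = Pal *\<^sub>v (W *\<^sub>v y1)" unfolding z_def Q_v[OF w_carrier] by simp
  then have "(Wi *\<^sub>v z (n - 1)) $ (n - 1) = (c - al) * y1 $ (n - 1)" using phi_Pal[OF y1] by simp
  also have "y1 $ (n - 1) = c - be" unfolding y1_def using r_last n_last(3) by simp
  finally show ?thesis .
qed

lemma s_last_nz: "(Wi *\<^sub>v z (n - 1)) $ (n - 1) \<noteq> 0"
proof -
  have "c - al = a" unfolding al_def using neg_eq[of a] by simp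
  moreover have "c - be = a + 1" unfolding be_def using neg_eq[of "a + 1"] by (simp add: algebra_simps)
  moreover have "a + 1 \<noteq> 0"
  proof
    assume "a + 1 = 0"
    then have "a = - 1" by (simp add: eq_neg_iff_add_eq_0)
    then show False using a1 neg_eq[of 1] by simp
  qed
  ultimately show ?thesis unfolding s_last using a0 by simp
qed

end

context constr
begin

definition "U = mat n n (\<lambda>(i,j). z j $ i)"

lemma U_carrier[simp]: "U \<in> carrier_mat n n" unfolding U_def by simp
lemma U_dims[simp]: "dim_row U = n" "dim_col U = n" unfolding U_def by auto
lemma U_col: "j < n \<Longrightarrow> col U j = z j"
  unfolding U_def by (rule eq_vecI) auto

lemma Wi_z: "j < n - 1 \<Longrightarrow> Wi *\<^sub>v z j = (if odd j then unit_vec n j else unit_vec n j + unit_vec n (Suc j))"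
proof -
  assume j: "j < n - 1"
  then have jn: "j < n" "j \<noteq> n - 1" by auto
  show ?thesis
  proof (cases "odd j")
    case True
    then show ?thesis unfolding z_def using jn Wi_w[OF jn(1)] by simp
  next
    case False
    have sj: "Suc j < n" using j by simp
    have "Wi *\<^sub>v (w j + w (Suc j)) = Wi *\<^sub>v w j + Wi *\<^sub>v w (Suc j)"
      by (rule mult_add_distrib_mat_vec[OF Wi(1)]) auto
    then show ?thesis unfolding z_def using jn False Wi_w[OF jn(1)] Wi_w[OF sj] by simp
  qed
qed

lemma U_inj:
  assumes x: "x \<in> carrier_vec n" and Ux: "U *\<^sub>v x = 0\<^sub>v n"
  shows "x = 0\<^sub>v n"
proof -
  define T where "T = Wi * U"
  have T: "T \<in> carrier_mat n n" unfolding T_def using mult_carrier_mat[OF Wi(1) U_carrier] .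
  have dT: "dim_row T = n" "dim_col T = n" using T by auto
  have dx: "dim_vec x = n" using x by auto
  have Tx: "T *\<^sub>v x = 0\<^sub>v n"
  proof -
    have "T *\<^sub>v x = Wi *\<^sub>v (U *\<^sub>v x)" unfolding T_def by (rule assoc_mult_mat_vec[OF Wi(1) U_carrier x])
    then show ?thesis unfolding Ux using mat_vec_zero[OF Wi(1)] by simp
  qed
  have Tij: "T $$ (i, j) = (Wi *\<^sub>v z j) $ i" if "i < n" "j < n" for i j
    unfolding T_def using that Wi(1) by (simp add: U_col)
  have Tsum: "(\<Sum>j<n. T $$ (i, j) * x $ j) = 0" if i: "i < n" for i
  proof -
    have "(T *\<^sub>v x) $ i = row T i \<bullet> x" using i dT by simp
    also have "\<dots> = (\<Sum>j<n. T $$ (i, j) * x $ j)"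
      unfolding scalar_prod_def dx atLeast0LessThan using i dT by (intro sum.cong) auto
    finally show ?thesis using Tx i by simp
  qed
  have xl: "x $ (n - 1) = 0"
  proof -
    have "(\<Sum>j<n. T $$ (n - 1, j) * x $ j) = (\<Sum>j<n. if j = n - 1 then T $$ (n - 1, n - 1) * x $ j else 0)"
    proof (rule sum.cong)
      fix j assume "j \<in> {..<n}"
      then have j: "j < n" by simp
      show "T $$ (n - 1, j) * x $ j = (if j = n - 1 then T $$ (n - 1, n - 1) * x $ j else 0)"
      proof (cases "j = n - 1")
        case False
        then have j1: "j < n - 1" using j by simp
        have "Suc j \<noteq> n - 1" if "even j"
        proof
          assume "Suc j = n - 1"
          then have "even (Suc j)" using n_last(2) by simp
          with that show False by simp
        qed
        then have "(Wi *\<^sub>v z j) $ (n - 1) = 0" unfolding Wi_z[OF j1] using False n_last(3) j1 by auto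
        then show ?thesis using Tij[OF n_last(3) j] False by simp
      qed simp
    qed simp
    also have "\<dots> = T $$ (n - 1, n - 1) * x $ (n - 1)" using n_last(3) by (simp add: sum.delta)
    finally have "T $$ (n - 1, n - 1) * x $ (n - 1) = 0" using Tsum[OF n_last(3)] by simp
    moreover have "T $$ (n - 1, n - 1) \<noteq> 0" using Tij[OF n_last(3) n_last(3)] s_last_nz by simp
    ultimately show ?thesis by simp
  qed
  have rowi: "x $ i + (if odd i then x $ (i - 1) else 0) = 0" if i: "i < n - 1" for i
  proof -
    have "(\<Sum>j<n. T $$ (i, j) * x $ j)
        = (\<Sum>j<n. (if j = i then x $ j else 0) + (if j = i - 1 \<and> odd i then x $ j else 0))"
    proof (rule sum.cong)
      fix j assume "j \<in> {..<n}"
      then have j: "j < n" by simp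
      show "T $$ (i, j) * x $ j = (if j = i then x $ j else 0) + (if j = i - 1 \<and> odd i then x $ j else 0)"
      proof (cases "j = n - 1")
        case True
        then show ?thesis using xl i by auto
      next
        case False
        then have j1: "j < n - 1" using j by simp
        have i': "i < n" using i by simp
        show ?thesis
        proof (cases "odd j")
          case True
          then show ?thesis unfolding Tij[OF i' j] Wi_z[OF j1] using i j1
            by (cases "i = 0") (auto simp: unit_vec_def)
        next
          case False
          then show ?thesis unfolding Tij[OF i' j] Wi_z[OF j1] using i j1
            by (cases "i = 0") (auto simp: unit_vec_def)
        qed
      qed
    qed simp
    also have "\<dots> = x $ i + (if odd i then x $ (i - 1) else 0)"
    proof -
      have f: "i < n" "i - 1 < n" "0 < n" using i by auto
      show ?thesis using f by (simp add: sum.distrib sum.delta)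
    qed
    finally show ?thesis using Tsum[of i] i by simp
  qed
  have "x $ i = 0" if i: "i < n" for i
  proof (cases "i = n - 1")
    case True then show ?thesis using xl by simp
  next
    case False
    then have i1: "i < n - 1" using i by simp
    show ?thesis
    proof (cases "odd i")
      case False then show ?thesis using rowi[OF i1] by simp
    next
      case True
      then have "i - 1 < n - 1" "even (i - 1)" using i1 by (auto simp: odd_pos)
      then have "x $ (i - 1) = 0" using rowi[of "i - 1"] by simp
      then show ?thesis using rowi[OF i1] True by simp
    qed
  qed
  then show ?thesis using x by (intro eq_vecI) auto
qed


definition "V = (SOME Y. Y \<in> carrier_mat n n \<and> U * Y = 1\<^sub>m n \<and> Y * U = 1\<^sub>m n)"

lemma V: "V \<in> carrier_mat n n" "U * V = 1\<^sub>m n" "V * U = 1\<^sub>m n"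
proof -
  have "\<exists>Y. Y \<in> carrier_mat n n \<and> U * Y = 1\<^sub>m n \<and> Y * U = 1\<^sub>m n"
    using inj_inverse[OF U_carrier U_inj] by blast
  from someI_ex[OF this] show "V \<in> carrier_mat n n" "U * V = 1\<^sub>m n" "V * U = 1\<^sub>m n"
    unfolding V_def by auto
qed

lemma DU: "D * U = U * mat_diag n d"
proof (rule eq_matI)
  fix i j assume ij: "i < dim_row (U * mat_diag n d)" "j < dim_col (U * mat_diag n d)"
  then have ij: "i < n" "j < n" by (auto simp: mat_diag_def)
  have "(D * U) $$ (i, j) = (D *\<^sub>v col U j) $ i" using ij by simp
  also have "\<dots> = d j * z j $ i" unfolding U_col[OF ij(2)] D_z[OF ij(2)] using ij by simp
  also have "\<dots> = (U * mat_diag n d) $$ (i, j)"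
    unfolding mat_diag_mult_right[OF U_carrier] using ij by (simp add: U_def)
  finally show "(D * U) $$ (i, j) = (U * mat_diag n d) $$ (i, j)" .
qed (auto simp: mat_diag_def)

lemma VDU: "V * D * U = mat_diag n d"
proof -
  have "V * D * U = V * (D * U)" by (rule assoc_mult_mat[OF V(1) D_carrier U_carrier])
  also have "\<dots> = V * (U * mat_diag n d)" unfolding DU ..
  also have "\<dots> = (V * U) * mat_diag n d" by (rule assoc_mult_mat[symmetric, OF V(1) U_carrier mat_diag_dim])
  also have "\<dots> = mat_diag n d" unfolding V(3) by (rule left_mult_one_mat[OF mat_diag_dim])
  finally show ?thesis .
qed

lemma D_diag: "diagonalizable D"
  unfolding diagonalizable_def dims3
proof (intro exI conjI)
  show "diagonal_mat (V * D * U)" unfolding VDU diagonal_mat_def mat_diag_def by auto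
qed (use V in auto)

lemma D_eig: "eigenvalue D e \<Longrightarrow> e \<in> {c, c + a, c + a + 1}"
proof -
  assume "eigenvalue D e"
  then obtain x where x: "x \<in> carrier_vec n" "x \<noteq> 0\<^sub>v n" "D *\<^sub>v x = e \<cdot>\<^sub>v x"
    unfolding eigenvalue_def eigenvector_def by auto
  define y where "y = V *\<^sub>v x"
  have y: "y \<in> carrier_vec n" unfolding y_def using V(1) x(1) by simp
  have "y \<noteq> 0\<^sub>v n"
  proof
    assume "y = 0\<^sub>v n"
    then have "U *\<^sub>v y = 0\<^sub>v n" using mat_vec_zero[OF U_carrier] by simp
    moreover have "U *\<^sub>v y = x" unfolding y_def
      using assoc_mult_mat_vec[symmetric, OF U_carrier V(1) x(1)] V(2) x(1) by simp
    ultimately show False using x(2) by simp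
  qed
  then obtain i where i: "i < n" "y $ i \<noteq> 0" using y by (metis eq_vecI carrier_vecD index_zero_vec(1,2))
  have "mat_diag n d *\<^sub>v y = e \<cdot>\<^sub>v y"
  proof -
    have VD: "V * D \<in> carrier_mat n n" using mult_carrier_mat[OF V(1) D_carrier] .
    have "mat_diag n d *\<^sub>v y = (V * D * U) *\<^sub>v y" unfolding VDU ..
    also have "\<dots> = (V * D) *\<^sub>v (U *\<^sub>v y)" by (rule assoc_mult_mat_vec[OF VD U_carrier y])
    also have "U *\<^sub>v y = x" unfolding y_def
      using assoc_mult_mat_vec[symmetric, OF U_carrier V(1) x(1)] V(2) x(1) by simp
    also have "(V * D) *\<^sub>v x = V *\<^sub>v (D *\<^sub>v x)" by (rule assoc_mult_mat_vec[OF V(1) D_carrier x(1)])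
    also have "\<dots> = e \<cdot>\<^sub>v y" unfolding x(3) y_def by (rule mult_mat_vec[OF V(1) x(1)])
    finally show ?thesis .
  qed
  then have "(mat_diag n d *\<^sub>v y) $ i = e * y $ i" using i y by (simp add: carrier_vecD)
  moreover have "(mat_diag n d *\<^sub>v y) $ i = d i * y $ i"
  proof -
    have dy: "dim_vec y = n" using y by auto
    have "(mat_diag n d *\<^sub>v y) $ i = (\<Sum>l<n. (if i = l then d l else 0) * y $ l)"
      using i unfolding mat_diag_def by (simp add: scalar_prod_def dy atLeast0LessThan)
    also have "\<dots> = (\<Sum>l<n. if l = i then d l * y $ l else 0)" by (rule sum.cong) auto
    also have "\<dots> = d i * y $ i" using i by (simp add: sum.delta)
    finally show ?thesis .
  qed
  ultimately have "d i = e" using i by simp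
  then show ?thesis unfolding d_def al_def be_def by (auto split: if_splits)
qed


end

theorem proposition2p9:
  fixes B :: "'a :: field mat" and k :: nat and c :: 'a
  assumes "CHAR('a) = 2"
    and "infinite (UNIV :: 'a set) \<or> card (UNIV :: 'a set) \<ge> 4"
    and "k \<ge> 1"
    and "B \<in> carrier_mat (4 * k + 1) (4 * k + 1)"
    and "non_derogative B"
    and "mat_trace B = c"
  shows "\<forall>a :: 'a. a \<noteq> 0 \<and> a \<noteq> 1 \<longrightarrow>
    (\<exists>N D. N \<in> carrier_mat (4 * k + 1) (4 * k + 1) \<and>
           D \<in> carrier_mat (4 * k + 1) (4 * k + 1) \<and>
           B = N + D \<and> N * N = 0\<^sub>m (4 * k + 1) (4 * k + 1) \<and>
           diagonalizable D \<and>
           (\<forall>e. eigenvalue D e \<longrightarrow> e \<in> {c, c + 1, c + a, c + a + 1}))"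
proof (intro allI impI)
  fix a :: 'a assume a: "a \<noteq> 0 \<and> a \<noteq> 1"
  obtain v where v: "v \<in> carrier_vec (4 * k + 1)"
    and cyc: "\<forall>q. q \<noteq> 0 \<longrightarrow> degree q < 4 * k + 1 \<longrightarrow> poly_mat q B *\<^sub>v v \<noteq> 0\<^sub>v (4 * k + 1)"
    using cyclic_vec[OF assms(4) assms(5)] by blast
  have ch2: "(1::'a) + 1 = 0"
  proof -
    have "of_nat CHAR('a) = (0::'a)" by (rule of_nat_CHAR)
    then have "of_nat 2 = (0::'a)" using assms(1) by simp
    then show ?thesis by simp
  qed
  interpret C: constr B "4 * k + 1" k v a c
    by unfold_locales (use assms v cyc ch2 a in auto)
  have BND: "B = C.N + C.D"
    unfolding C.D_def using assms(4) C.N_carrier by (intro eq_matI) auto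
  show "\<exists>N D. N \<in> carrier_mat (4 * k + 1) (4 * k + 1) \<and>
           D \<in> carrier_mat (4 * k + 1) (4 * k + 1) \<and>
           B = N + D \<and> N * N = 0\<^sub>m (4 * k + 1) (4 * k + 1) \<and>
           diagonalizable D \<and>
           (\<forall>e. eigenvalue D e \<longrightarrow> e \<in> {c, c + 1, c + a, c + a + 1})"
    using C.N_carrier C.D_carrier BND C.N_sq C.D_diag C.D_eig by blast
qed

end
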